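(* Let $F$ be a non-abelian free group. For every integer $m\ge 5$ there exist subgroups $H,K\le F$ with $\operatorname{rk}(H)=\operatorname{rk}(K)=m$ and $\operatorname{rk}(H\cap K)\ge m$ but $\operatorname{rk}(H\vee K)>m$. In other words, Guzman's Group-Theoretic Conjecture fails for every $m\ge 5$.
   Context: $H\vee K$ denotes the subgroup generated by $H$ and $K$. Guzman's Group-Theoretic Conjecture for a given $m\ge2$ asserts: if two subgroups $H,K$ of a free group both have rank $m$ and $\operatorname{rk}(H\cap K)\ge m$, then $\operatorname{rk}(H\vee K)\le m$. *)

theory Defs
  imports "HOL-Algebra.Algebra" "HOL-Library.Extended_Nat"
begin

definition letter_val :: "('a, 'b) monoid_scheme \<Rightarrow> 'a \<times> bool \<Rightarrow> 'a" where
  "letter_val G l = (if snd l then fst l else inv\<^bsub>G\<^esub> (fst l))"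

definition word_val :: "('a, 'b) monoid_scheme \<Rightarrow> ('a \<times> bool) list \<Rightarrow> 'a" where
  "word_val G w = foldr (\<lambda>l acc. letter_val G l \<otimes>\<^bsub>G\<^esub> acc) w \<one>\<^bsub>G\<^esub>"

definition reduced_word :: "('a \<times> bool) list \<Rightarrow> bool" where
  "reduced_word w = (\<forall>i. Suc i < length w \<longrightarrow>
      \<not> (fst (w ! i) = fst (w ! Suc i) \<and> snd (w ! i) \<noteq> snd (w ! Suc i)))"

definition free_basis :: "('a, 'b) monoid_scheme \<Rightarrow> 'a set \<Rightarrow> bool" where
  "free_basis G B = (B \<subseteq> carrier G \<and> generate G B = carrier G \<and>
     (\<forall>w. 0 < length w \<and> set (map fst w) \<subseteq> B \<and> reduced_word w \<longrightarrow> word_val G w \<noteq> one G))"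

definition free_group :: "('a, 'b) monoid_scheme \<Rightarrow> bool" where
  "free_group G = (group G \<and> (\<exists>B. free_basis G B))"

definition grank :: "('a, 'b) monoid_scheme \<Rightarrow> 'a set \<Rightarrow> enat" where
  "grank G H = (INF S \<in> {S. S \<subseteq> H \<and> generate G S = H}.
                  (if finite S then enat (card S) else \<infinity>))"

end

theory Submission
  imports Defs
begin

definition invw :: "('a \<times> bool) list \<Rightarrow> ('a \<times> bool) list" where
  "invw w = rev (map (\<lambda>l. (fst l, \<not> snd l)) w)"

lemma word_val_Nil[simp]: "word_val G [] = \<one>\<^bsub>G\<^esub>"
  by (simp add: word_val_def)

lemma word_val_Cons[simp]: "word_val G (l # w) = letter_val G l \<otimes>\<^bsub>G\<^esub> word_val G w"
  by (simp add: word_val_def)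

context group begin

lemma letter_val_closed: "fst l \<in> carrier G \<Longrightarrow> letter_val G l \<in> carrier G"
  by (simp add: letter_val_def)

lemma word_val_closed: "set (map fst w) \<subseteq> carrier G \<Longrightarrow> word_val G w \<in> carrier G"
  by (induction w) (auto simp: letter_val_closed)

lemma word_val_append:
  "set (map fst u) \<subseteq> carrier G \<Longrightarrow> set (map fst w) \<subseteq> carrier G \<Longrightarrow>
   word_val G (u @ w) = word_val G u \<otimes> word_val G w"
  by (induction u) (auto simp: letter_val_closed word_val_closed m_assoc)

lemma letter_val_flip: "fst l \<in> carrier G \<Longrightarrow> letter_val G (fst l, \<not> snd l) = inv (letter_val G l)"
  by (auto simp: letter_val_def)

lemma word_val_invw:
  "set (map fst w) \<subseteq> carrier G \<Longrightarrow> word_val G (invw w) = inv (word_val G w)"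
proof (induction w)
  case Nil then show ?case by (simp add: invw_def)
next
  case (Cons l w)
  have "invw (l # w) = invw w @ [(fst l, \<not> snd l)]" by (simp add: invw_def)
  moreover have "set (map fst (invw w)) \<subseteq> carrier G" using Cons.prems by (auto simp: invw_def)
  ultimately show ?case using Cons
    by (simp add: word_val_append letter_val_flip letter_val_closed word_val_closed inv_mult_group)
qed

end

definition cancel :: "('a \<times> bool) \<Rightarrow> ('a \<times> bool) \<Rightarrow> bool" where
  "cancel l l' \<longleftrightarrow> fst l = fst l' \<and> snd l \<noteq> snd l'"

fun push :: "('a \<times> bool) \<Rightarrow> ('a \<times> bool) list \<Rightarrow> ('a \<times> bool) list" where
  "push l [] = [l]"
| "push l (l' # r) = (if cancel l l' then r else l # l' # r)"

definition reduce :: "('a \<times> bool) list \<Rightarrow> ('a \<times> bool) list" where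
  "reduce w = foldr push w []"

lemma reduce_Cons: "reduce (l # w) = push l (reduce w)"
  by (simp add: reduce_def)

lemma set_push: "set (push l r) \<subseteq> insert l (set r)"
  by (cases r) auto

lemma set_reduce: "set (reduce w) \<subseteq> set w"
  by (induction w) (auto simp: reduce_def dest: set_mp[OF set_push])

lemma reduced_Cons: "reduced_word (l # w) \<longleftrightarrow> reduced_word w \<and> (w \<noteq> [] \<longrightarrow> \<not> cancel l (hd w))"
proof -
  have "reduced_word (l # w) \<longleftrightarrow> (\<forall>i. Suc i < Suc (length w) \<longrightarrow>
      \<not> (fst ((l#w) ! i) = fst ((l#w) ! Suc i) \<and> snd ((l#w) ! i) \<noteq> snd ((l#w) ! Suc i)))"
    by (simp add: reduced_word_def)
  also have "\<dots> \<longleftrightarrow> (w \<noteq> [] \<longrightarrow> \<not> cancel l (hd w)) \<and> reduced_word w"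
  proof
    assume H: "\<forall>i. Suc i < Suc (length w) \<longrightarrow>
      \<not> (fst ((l#w) ! i) = fst ((l#w) ! Suc i) \<and> snd ((l#w) ! i) \<noteq> snd ((l#w) ! Suc i))"
    have 1: "w \<noteq> [] \<longrightarrow> \<not> cancel l (hd w)"
      using H[rule_format, of 0] by (cases w) (auto simp: cancel_def)
    have 2: "reduced_word w" unfolding reduced_word_def
    proof (intro allI impI)
      fix i assume "Suc i < length w"
      then show "\<not> (fst (w ! i) = fst (w ! Suc i) \<and> snd (w ! i) \<noteq> snd (w ! Suc i))"
        using H[rule_format, of "Suc i"] by simp
    qed
    show "(w \<noteq> [] \<longrightarrow> \<not> cancel l (hd w)) \<and> reduced_word w" using 1 2 by blast
  next
    assume H: "(w \<noteq> [] \<longrightarrow> \<not> cancel l (hd w)) \<and> reduced_word w"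
    show "\<forall>i. Suc i < Suc (length w) \<longrightarrow>
      \<not> (fst ((l#w) ! i) = fst ((l#w) ! Suc i) \<and> snd ((l#w) ! i) \<noteq> snd ((l#w) ! Suc i))"
    proof (intro allI impI)
      fix i assume i: "Suc i < Suc (length w)"
      show "\<not> (fst ((l#w) ! i) = fst ((l#w) ! Suc i) \<and> snd ((l#w) ! i) \<noteq> snd ((l#w) ! Suc i))"
      proof (cases i)
        case 0
        then show ?thesis using H i by (cases w) (auto simp: cancel_def)
      next
        case (Suc j)
        then show ?thesis using H i by (simp add: reduced_word_def)
      qed
    qed
  qed
  finally show ?thesis by blast
qed

lemma reduced_Nil: "reduced_word []"
  by (simp add: reduced_word_def)

lemma reduced_push: "reduced_word r \<Longrightarrow> reduced_word (push l r)"
  by (cases r) (auto simp: reduced_Cons reduced_Nil)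

lemma reduced_reduce: "reduced_word (reduce w)"
  by (induction w) (auto simp: reduce_def reduced_Nil reduced_push)

lemma (in group) word_val_push_map:
  assumes "f (fst l) \<in> carrier G" "set (map f (map fst r)) \<subseteq> carrier G"
  shows "word_val G (map (\<lambda>l. (f (fst l), snd l)) (push l r)) =
         word_val G (map (\<lambda>l. (f (fst l), snd l)) (l # r))"
proof (cases r)
  case Nil then show ?thesis by simp
next
  case (Cons l' r')
  show ?thesis
  proof (cases "cancel l l'")
    case True
    have c: "f (fst l') \<in> carrier G" using assms Cons by auto
    have r': "word_val G (map (\<lambda>l. (f (fst l), snd l)) r') \<in> carrier G"
      using assms Cons by (intro word_val_closed) auto
    have "letter_val G (f (fst l), snd l) \<otimes> letter_val G (f (fst l'), snd l') = \<one>"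
      using True c by (cases "snd l") (auto simp: cancel_def letter_val_def)
    moreover have "letter_val G (f (fst l), snd l) \<in> carrier G"
      using assms by (simp add: letter_val_closed)
    moreover have "letter_val G (f (fst l'), snd l') \<in> carrier G"
      using c by (simp add: letter_val_closed)
    ultimately show ?thesis using Cons True r'
      by (simp add: m_assoc[symmetric])
  next
    case False then show ?thesis using Cons by simp
  qed
qed

lemma (in group) word_val_reduce_map:
  assumes "set (map f (map fst w)) \<subseteq> carrier G"
  shows "word_val G (map (\<lambda>l. (f (fst l), snd l)) (reduce w)) =
         word_val G (map (\<lambda>l. (f (fst l), snd l)) w)"
  using assms
proof (induction w)
  case Nil then show ?case by (simp add: reduce_def)
next
  case (Cons l w)
  have s: "set (map f (map fst (reduce w))) \<subseteq> carrier G"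
    using Cons.prems set_reduce[of w] by auto
  have "word_val G (map (\<lambda>l. (f (fst l), snd l)) (reduce (l # w))) =
        word_val G (map (\<lambda>l. (f (fst l), snd l)) (l # reduce w))"
    unfolding reduce_Cons using Cons.prems s by (intro word_val_push_map) auto
  then show ?case using Cons by simp
qed

lemma (in group) gen_word:
  assumes "B \<subseteq> carrier G" "g \<in> generate G B"
  shows "\<exists>w. set (map fst w) \<subseteq> B \<and> word_val G w = g"
  using assms(2)
proof induction
  case one
  then show ?case by (intro exI[of _ "[]"]) simp
next
  case (incl h)
  then show ?case using assms(1)
    by (intro exI[of _ "[(h, True)]"]) (auto simp: letter_val_def)
next
  case (inv h)
  then show ?case using assms(1)
    by (intro exI[of _ "[(h, False)]"]) (auto simp: letter_val_def)
next
  case (eng h1 h2)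
  then obtain w1 w2 where "set (map fst w1) \<subseteq> B" "word_val G w1 = h1"
    "set (map fst w2) \<subseteq> B" "word_val G w2 = h2" by blast
  then show ?case using assms(1)
    by (intro exI[of _ "w1 @ w2"]) (auto simp: word_val_append)
qed

definition mapw :: "('a \<Rightarrow> 'c) \<Rightarrow> ('a \<times> bool) list \<Rightarrow> ('c \<times> bool) list" where
  "mapw f w = map (\<lambda>l. (f (fst l), snd l)) w"

lemma mapw_append: "mapw f (u @ w) = mapw f u @ mapw f w"
  by (simp add: mapw_def)

lemma mapw_invw: "mapw f (invw w) = invw (mapw f w)"
  by (simp add: mapw_def invw_def rev_map)

lemma mapw_fst: "set (map fst w) \<subseteq> B \<Longrightarrow> f ` B \<subseteq> C \<Longrightarrow> set (map fst (mapw f w)) \<subseteq> C"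
  by (auto simp: mapw_def)

lemma free_basis_sub: "free_basis F B \<Longrightarrow> B \<subseteq> carrier F"
  by (simp add: free_basis_def)

lemma free_wd:
  assumes F: "group F" and fb: "free_basis F B" and T: "group T" and f: "f ` B \<subseteq> carrier T"
    and w: "set (map fst w) \<subseteq> B" and one: "word_val F w = \<one>\<^bsub>F\<^esub>"
  shows "word_val T (mapw f w) = \<one>\<^bsub>T\<^esub>"
proof -
  have BF: "B \<subseteq> carrier F" using fb by (simp add: free_basis_sub)
  have "word_val F (map (\<lambda>l. (id (fst l), snd l)) (reduce w)) =
        word_val F (map (\<lambda>l. (id (fst l), snd l)) w)"
    using w BF by (intro group.word_val_reduce_map[OF F]) auto
  then have r1: "word_val F (reduce w) = \<one>\<^bsub>F\<^esub>" using one by simp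
  have rB: "set (map fst (reduce w)) \<subseteq> B" using set_reduce[of w] w by auto
  have "reduce w = []"
  proof (rule ccontr)
    assume "reduce w \<noteq> []"
    then have "0 < length (reduce w)" by simp
    then have "word_val F (reduce w) \<noteq> one F"
      using fb rB reduced_reduce[of w] unfolding free_basis_def by blast
    then show False using r1 by simp
  qed
  moreover have "word_val T (mapw f (reduce w)) = word_val T (mapw f w)"
    unfolding mapw_def using w f set_reduce[of w]
    by (intro group.word_val_reduce_map[OF T]) auto
  ultimately show ?thesis by (simp add: mapw_def)
qed

lemma free_wd2:
  assumes F: "group F" and fb: "free_basis F B" and T: "group T" and f: "f ` B \<subseteq> carrier T"
    and w1: "set (map fst w1) \<subseteq> B" and w2: "set (map fst w2) \<subseteq> B"
    and eq: "word_val F w1 = word_val F w2"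
  shows "word_val T (mapw f w1) = word_val T (mapw f w2)"
proof -
  have BF: "B \<subseteq> carrier F" using fb by (simp add: free_basis_sub)
  have c1: "word_val F w1 \<in> carrier F" using w1 BF by (intro group.word_val_closed[OF F]) auto
  have s1: "set (map fst w1) \<subseteq> carrier F" using w1 BF by auto
  have s2: "set (map fst w2) \<subseteq> carrier F" using w2 BF by auto
  have s3: "set (map fst (invw w2)) \<subseteq> carrier F" using s2 by (auto simp: invw_def)
  have "word_val F (w1 @ invw w2) = word_val F w1 \<otimes>\<^bsub>F\<^esub> inv\<^bsub>F\<^esub> word_val F w2"
    using s1 s2 s3 by (simp add: group.word_val_append[OF F] group.word_val_invw[OF F])
  then have "word_val F (w1 @ invw w2) = \<one>\<^bsub>F\<^esub>"
    using eq c1 by (simp add: group.r_inv[OF F])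
  then have "word_val T (mapw f (w1 @ invw w2)) = \<one>\<^bsub>T\<^esub>"
    using w1 w2 by (intro free_wd[OF F fb T f]) (auto simp: invw_def)
  moreover have m1: "set (map fst (mapw f w1)) \<subseteq> carrier T" using mapw_fst[OF w1 f] .
  moreover have m2: "set (map fst (mapw f w2)) \<subseteq> carrier T" using mapw_fst[OF w2 f] .
  moreover have m3: "set (map fst (invw (mapw f w2))) \<subseteq> carrier T" using m2 by (auto simp: invw_def)
  ultimately have "word_val T (mapw f w1) \<otimes>\<^bsub>T\<^esub> inv\<^bsub>T\<^esub> word_val T (mapw f w2) = \<one>\<^bsub>T\<^esub>"
    by (simp add: mapw_append mapw_invw group.word_val_append[OF T] group.word_val_invw[OF T])
  then show ?thesis
    using group.word_val_closed[OF T m1] group.word_val_closed[OF T m2]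
    by (metis T group.inv_equality group.inv_inv group.inv_closed)
qed

lemma free_hom:
  assumes F: "group F" and fb: "free_basis F B" and T: "group T" and f: "f ` B \<subseteq> carrier T"
  obtains \<psi> where "\<psi> \<in> hom F T"
    "\<And>w. set (map fst w) \<subseteq> B \<Longrightarrow> \<psi> (word_val F w) = word_val T (mapw f w)"
proof -
  have BF: "B \<subseteq> carrier F" using fb by (simp add: free_basis_sub)
  have gen: "generate F B = carrier F" using fb by (simp add: free_basis_def)
  define rep where "rep g = (SOME w. set (map fst w) \<subseteq> B \<and> word_val F w = g)" for g
  define \<psi> where "\<psi> g = word_val T (mapw f (rep g))" for g
  have rep: "set (map fst (rep g)) \<subseteq> B \<and> word_val F (rep g) = g" if "g \<in> carrier F" for g
  proof -
    have "\<exists>w. set (map fst w) \<subseteq> B \<and> word_val F w = g"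
      using group.gen_word[OF F BF] that gen by blast
    then show ?thesis unfolding rep_def by (rule someI_ex)
  qed
  have key: "\<psi> (word_val F w) = word_val T (mapw f w)" if w: "set (map fst w) \<subseteq> B" for w
  proof -
    have c: "word_val F w \<in> carrier F" using w BF by (intro group.word_val_closed[OF F]) auto
    show ?thesis unfolding \<psi>_def using rep[OF c] w
      by (intro free_wd2[OF F fb T f]) auto
  qed
  have "\<psi> \<in> hom F T"
  proof (rule homI)
    fix x assume x: "x \<in> carrier F"
    show "\<psi> x \<in> carrier T" unfolding \<psi>_def
      using rep[OF x] by (intro group.word_val_closed[OF T] mapw_fst[OF _ f]) auto
  next
    fix x y assume x: "x \<in> carrier F" and y: "y \<in> carrier F"
    have "x \<otimes>\<^bsub>F\<^esub> y = word_val F (rep x @ rep y)"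
      using rep[OF x] rep[OF y] BF by (simp add: group.word_val_append[OF F] subset_iff)
    then have "\<psi> (x \<otimes>\<^bsub>F\<^esub> y) = word_val T (mapw f (rep x @ rep y))"
      using rep[OF x] rep[OF y] by (simp add: key)
    also have "\<dots> = \<psi> x \<otimes>\<^bsub>T\<^esub> \<psi> y" unfolding \<psi>_def mapw_append
      using rep[OF x] rep[OF y] mapw_fst[OF _ f]
      by (intro group.word_val_append[OF T]) auto
    finally show "\<psi> (x \<otimes>\<^bsub>F\<^esub> y) = \<psi> x \<otimes>\<^bsub>T\<^esub> \<psi> y" .
  qed
  then show ?thesis using key that by blast
qed

definition symd :: "'l set \<Rightarrow> 'l set \<Rightarrow> 'l set" where
  "symd U0 U1 = {x. (x \<in> U0) \<noteq> (x \<in> U1)}"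

lemma symd_empty[simp]: "symd U0 {} = U0" "symd {} U0 = U0"
  by (auto simp: symd_def)

lemma symd_self[simp]: "symd U0 U0 = {}"
  by (auto simp: symd_def)

lemma symd_assoc: "symd (symd U0 U1) U2 = symd U0 (symd U1 U2)"
  by (auto simp: symd_def)

lemma symd_comm: "symd U0 U1 = symd U1 U0"
  by (auto simp: symd_def)

lemma symd_eq_empty: "symd U0 U1 = {} \<longleftrightarrow> U0 = U1"
  by (auto simp: symd_def)

lemma symd_insert: "r \<notin> U \<Longrightarrow> symd U {r} = insert r U"
  by (auto simp: symd_def)

abbreviation BG :: "('s \<Rightarrow> 's) monoid" where "BG \<equiv> BijGroup UNIV"

lemma BG_group: "group BG" by (rule group_BijGroup)

lemma BG_carrier: "carrier BG = {f. bij f}"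
  by (auto simp: BijGroup_def Bij_def extensional_def)

lemma BG_mult: "f \<in> carrier BG \<Longrightarrow> g \<in> carrier BG \<Longrightarrow> f \<otimes>\<^bsub>BG\<^esub> g = f \<circ> g"
  by (simp add: BijGroup_def compose_def restrict_def fun_eq_iff)

lemma BG_one: "\<one>\<^bsub>BG\<^esub> = id"
  by (simp add: BijGroup_def restrict_def fun_eq_iff)

lemma BG_inv:
  assumes "g \<circ> f = id" "f \<circ> g = id"
  shows "inv\<^bsub>BG\<^esub> f = g"
proof -
  have bf: "bij f" using o_bij[of g f] assms by blast
  have bg: "bij g" using o_bij[of f g] assms by blast
  show ?thesis
    using bf bg assms
    by (intro group.inv_equality[OF BG_group]) (auto simp: BG_carrier BG_mult BG_one)
qed

subsection \<open>Covers\<close>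

definition lab :: "(nat \<Rightarrow> 'v \<Rightarrow> 'v) \<Rightarrow> ('v \<Rightarrow> 'l set) \<Rightarrow> ('v \<Rightarrow> 'l set) \<Rightarrow> nat \<Rightarrow> 'v \<Rightarrow> 'l set" where
  "lab s l0 l1 c v = (if c = 0 then l0 v else if c = 1 then l1 v
      else if c = 2 then l0 (s 2 v) else l1 (s 3 v))"

definition cact :: "(nat \<Rightarrow> 'v \<Rightarrow> 'v) \<Rightarrow> ('v \<Rightarrow> 'l set) \<Rightarrow> ('v \<Rightarrow> 'l set) \<Rightarrow> nat \<Rightarrow> 'v \<times> 'l set \<Rightarrow> 'v \<times> 'l set" where
  "cact s l0 l1 c st = (s c (fst st), symd (snd st) (lab s l0 l1 c (fst st)))"

definition cover :: "(nat \<Rightarrow> 'v \<Rightarrow> 'v) \<Rightarrow> bool" where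
  "cover s \<longleftrightarrow> (\<forall>v. s 2 (s 0 v) = v \<and> s 0 (s 2 v) = v \<and> s 3 (s 1 v) = v \<and> s 1 (s 3 v) = v)"

fun wact :: "(nat \<Rightarrow> 'v \<Rightarrow> 'v) \<Rightarrow> ('v \<Rightarrow> 'l set) \<Rightarrow> ('v \<Rightarrow> 'l set) \<Rightarrow> nat list \<Rightarrow> 'v \<times> 'l set \<Rightarrow> 'v \<times> 'l set" where
  "wact s l0 l1 [] st = st"
| "wact s l0 l1 (c # cs) st = cact s l0 l1 c (wact s l0 l1 cs st)"

lemma wact_append: "wact s l0 l1 (xs @ ys) st = wact s l0 l1 xs (wact s l0 l1 ys st)"
  by (induction xs) auto

lemma cact_inv:
  assumes "cover s"
  shows "cact s l0 l1 2 \<circ> cact s l0 l1 0 = id" "cact s l0 l1 0 \<circ> cact s l0 l1 2 = id"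
        "cact s l0 l1 3 \<circ> cact s l0 l1 1 = id" "cact s l0 l1 1 \<circ> cact s l0 l1 3 = id"
  using assms by (auto simp: fun_eq_iff cact_def lab_def cover_def symd_assoc)

definition aff :: "('v \<times> 'l set \<Rightarrow> 'v \<times> 'l set) \<Rightarrow> bool" where
  "aff f \<longleftrightarrow> (\<forall>v U0. f (v, U0) = (fst (f (v, {})), symd U0 (snd (f (v, {})))))"

lemma aff_id: "aff id" by (simp add: aff_def)

lemma aff_cact: "aff (cact s l0 l1 c)" by (simp add: aff_def cact_def)

lemma aff_comp:
  assumes f: "aff f" and g: "aff g"
  shows "aff (f \<circ> g)"
  unfolding aff_def
proof (intro allI)
  fix v U0
  obtain gv gc where gg: "g (v, {}) = (gv, gc)" by (cases "g (v, {})")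
  obtain fv fc where ff: "f (gv, {}) = (fv, fc)" by (cases "f (gv, {})")
  have g1: "g (v, U0) = (gv, symd U0 gc)" using g gg unfolding aff_def by (metis fst_conv snd_conv)
  have f1: "f (gv, U) = (fv, symd U fc)" for U using f ff unfolding aff_def by (metis fst_conv snd_conv)
  show "(f \<circ> g) (v, U0) = (fst ((f \<circ> g) (v, {})), symd U0 (snd ((f \<circ> g) (v, {}))))"
    using g1 f1 gg by (simp add: symd_assoc)
qed

definition enc :: "'a \<Rightarrow> 'a \<Rightarrow> nat list \<Rightarrow> ('a \<times> bool) list" where
  "enc a b cs = map (\<lambda>c. (if c = 0 \<or> c = 2 then a else b, c < 2)) cs"

lemma enc_append: "enc a b (xs @ ys) = enc a b xs @ enc a b ys"
  by (simp add: enc_def)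

definition invc :: "nat list \<Rightarrow> nat list" where
  "invc cs = rev (map (\<lambda>c. (c + 2) mod 4) cs)"

lemma enc_invc: "\<forall>c\<in>set cs. c < 4 \<Longrightarrow> enc a b (invc cs) = invw (enc a b cs)"
proof -
  assume h: "\<forall>c\<in>set cs. c < 4"
  have "(if (c + 2) mod 4 = 0 \<or> (c + 2) mod 4 = 2 then a else b, (c + 2) mod 4 < 2) =
        (if c = 0 \<or> c = 2 then a else b, \<not> c < 2)" if "c < 4" for c::nat
    using that by (cases c; cases "c - 1"; cases "c - 2"; auto)
  then show ?thesis using h by (auto simp: enc_def invc_def invw_def rev_map)
qed

fun cpush :: "nat \<Rightarrow> nat list \<Rightarrow> nat list" where
  "cpush c [] = [c]"
| "cpush c (d # r) = (if d = (c + 2) mod 4 then r else c # d # r)"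

definition creduce :: "nat list \<Rightarrow> nat list" where
  "creduce cs = foldr cpush cs []"

definition encl :: "'a \<Rightarrow> 'a \<Rightarrow> nat \<Rightarrow> 'a \<times> bool" where
  "encl a b c = (if c = 0 \<or> c = 2 then a else b, c < 2)"

lemma enc_Cons: "enc a b (c # cs) = encl a b c # enc a b cs"
  by (simp add: enc_def encl_def)

lemma enc_Nil: "enc a b [] = []"
  by (simp add: enc_def)

lemma (in group) encl_cancel:
  assumes "a \<in> carrier G" "b \<in> carrier G" "c < 4"
  shows "letter_val G (encl a b c) \<otimes> letter_val G (encl a b ((c + 2) mod 4)) = \<one>"
proof -
  have "c = 0 \<or> c = 1 \<or> c = 2 \<or> c = 3" using assms(3) by arith
  then show ?thesis using assms(1,2) by (auto simp: encl_def letter_val_def)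
qed

lemma (in group) word_val_creduce:
  assumes a: "a \<in> carrier G" and b: "b \<in> carrier G" and cs: "\<forall>c\<in>set cs. c < 4"
  shows "word_val G (enc a b (creduce cs)) = word_val G (enc a b cs)"
  using cs
proof (induction cs)
  case Nil then show ?case by (simp add: creduce_def)
next
  case (Cons c cs)
  have hc: "c < 4" using Cons.prems by simp
  have IH: "word_val G (enc a b (creduce cs)) = word_val G (enc a b cs)" using Cons by simp
  have cl: "word_val G (enc a b r) \<in> carrier G" for r
    using a b by (intro word_val_closed) (auto simp: enc_def)
  have lc: "letter_val G (encl a b e) \<in> carrier G" for e
    using a b by (intro letter_val_closed) (auto simp: encl_def)
  have step: "word_val G (enc a b (cpush c r)) = word_val G (enc a b (c # r))" for r
  proof (cases r)
    case Nil then show ?thesis by simp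
  next
    case (Cons d r')
    show ?thesis
    proof (cases "d = (c + 2) mod 4")
      case True
      have "word_val G (enc a b (c # r)) =
            (letter_val G (encl a b c) \<otimes> letter_val G (encl a b d)) \<otimes> word_val G (enc a b r')"
        using \<open>r = d # r'\<close> lc cl by (simp add: enc_Cons m_assoc)
      also have "\<dots> = word_val G (enc a b r')"
        using True encl_cancel[OF a b hc] cl lc by simp
      finally show ?thesis using \<open>r = d # r'\<close> True by simp
    next
      case False then show ?thesis using \<open>r = d # r'\<close> by simp
    qed
  qed
  have "creduce (c # cs) = cpush c (creduce cs)" by (simp add: creduce_def)
  then show ?case using IH step by (simp add: enc_Cons)
qed

inductive_set sp :: "'l set set \<Rightarrow> 'l set set" for A where
  sp_empty: "{} \<in> sp A"
| sp_step: "x \<in> A \<Longrightarrow> y \<in> sp A \<Longrightarrow> symd x y \<in> sp A"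

lemma sp_closed: "y \<in> sp A \<Longrightarrow> z \<in> sp A \<Longrightarrow> symd y z \<in> sp A"
  by (induction rule: sp.induct) (auto simp: symd_assoc intro: sp.intros)

lemma sp_base: "x \<in> A \<Longrightarrow> x \<in> sp A"
  by (metis sp_empty sp_step symd_empty(1))


lemma sp_insert: "sp (insert x A) \<subseteq> sp A \<union> (symd x) ` sp A"
proof
  fix y assume "y \<in> sp (insert x A)"
  then show "y \<in> sp A \<union> (symd x) ` sp A"
  proof induction
    case sp_empty then show ?case by (auto intro: sp.intros)
  next
    case (sp_step z y)
    show ?case
    proof (cases "z = x")
      case True
      show ?thesis
      proof (cases "y \<in> sp A")
        case True then show ?thesis using \<open>z = x\<close> by blast
      next
        case False
        then obtain y' where "y' \<in> sp A" "y = symd x y'" using sp_step.IH by blast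
        then show ?thesis using \<open>z = x\<close> by (simp add: symd_assoc[symmetric])
      qed
    next
      case False
      then have zA: "z \<in> A" using sp_step.hyps by blast
      show ?thesis
      proof (cases "y \<in> sp A")
        case True then show ?thesis using zA by (blast intro: sp.intros)
      next
        case False
        then obtain y' where y': "y' \<in> sp A" "y = symd x y'" using sp_step.IH by blast
        have "symd z y = symd x (symd z y')"
          using y' by (auto simp: symd_def)
        moreover have "symd z y' \<in> sp A" using zA y' by (blast intro: sp.intros)
        ultimately show ?thesis by blast
      qed
    qed
  qed
qed

lemma sp_Nil: "sp {} = {{}}"
proof
  show "sp {} \<subseteq> {{}}"
  proof
    fix y assume "y \<in> sp ({}::'l set set)"
    then show "y \<in> {{}}" by induction auto
  qed
next
  show "{{}} \<subseteq> sp {}" using sp_empty by blast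
qed

lemma sp_card: "finite A \<Longrightarrow> finite (sp A) \<and> card (sp A) \<le> 2 ^ card A"
proof (induction rule: finite_induct)
  case empty then show ?case by (simp add: sp_Nil)
next
  case (insert x A)
  have fin: "finite (sp A \<union> (symd x) ` sp A)" using insert by simp
  have "card (sp (insert x A)) \<le> card (sp A \<union> (symd x) ` sp A)"
    using sp_insert fin by (intro card_mono) auto
  also have "\<dots> \<le> card (sp A) + card ((symd x) ` sp A)" by (rule card_Un_le)
  also have "\<dots> \<le> card (sp A) + card (sp A)" using card_image_le insert by auto
  also have "\<dots> \<le> 2 ^ card (insert x A)" using insert by simp
  moreover have "finite (sp (insert x A))" using fin sp_insert[of x A] by (rule finite_subset[rotated])
  ultimately show ?case by simp
qed

lemma grank_ge:
  assumes "\<And>S. S \<subseteq> J \<Longrightarrow> generate F S = J \<Longrightarrow> finite S \<Longrightarrow> n \<le> card S"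
  shows "enat n \<le> grank F J"
  unfolding grank_def
proof (rule INF_greatest)
  fix S assume "S \<in> {S. S \<subseteq> J \<and> generate F S = J}"
  then show "enat n \<le> (if finite S then enat (card S) else \<infinity>)"
    using assms by auto
qed

lemma grank_le:
  assumes "S \<subseteq> J" "generate F S = J" "finite S" "card S \<le> n"
  shows "grank F J \<le> enat n"
  unfolding grank_def
  by (rule INF_lower2[of S]) (use assms in auto)

locale fgrp =
  fixes F :: "('a, 'b) monoid_scheme" and B :: "'a set" and a :: 'a and b :: 'a
  assumes grp: "group F" and fb: "free_basis F B" and aB: "a \<in> B" and bB: "b \<in> B" and ab: "a \<noteq> b"
begin

lemma Fmon: "monoid F" using grp by (rule group.is_monoid)
lemma BGmon: "monoid BG" using BG_group by (rule group.is_monoid)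

lemma BF: "B \<subseteq> carrier F" using fb by (simp add: free_basis_def)
lemma genB: "generate F B = carrier F" using fb by (simp add: free_basis_def)

definition letf :: "(nat \<Rightarrow> 'v \<Rightarrow> 'v) \<Rightarrow> ('v \<Rightarrow> 'l set) \<Rightarrow> ('v \<Rightarrow> 'l set) \<Rightarrow> 'a \<Rightarrow> ('v \<times> 'l set \<Rightarrow> 'v \<times> 'l set)" where
  "letf s l0 l1 x = (if x = a then cact s l0 l1 0 else if x = b then cact s l0 l1 1 else id)"

definition letfi :: "(nat \<Rightarrow> 'v \<Rightarrow> 'v) \<Rightarrow> ('v \<Rightarrow> 'l set) \<Rightarrow> ('v \<Rightarrow> 'l set) \<Rightarrow> 'a \<Rightarrow> ('v \<times> 'l set \<Rightarrow> 'v \<times> 'l set)" where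
  "letfi s l0 l1 x = (if x = a then cact s l0 l1 2 else if x = b then cact s l0 l1 3 else id)"

definition psi :: "(nat \<Rightarrow> 'v \<Rightarrow> 'v) \<Rightarrow> ('v \<Rightarrow> 'l set) \<Rightarrow> ('v \<Rightarrow> 'l set) \<Rightarrow> 'a \<Rightarrow> ('v \<times> 'l set \<Rightarrow> 'v \<times> 'l set)" where
  "psi s l0 l1 = (SOME \<psi>. \<psi> \<in> hom F (BijGroup (UNIV :: ('v \<times> 'l set) set)) \<and>
     (\<forall>w. set (map fst w) \<subseteq> B \<longrightarrow> \<psi> (word_val F w) = word_val (BijGroup (UNIV :: ('v \<times> 'l set) set)) (mapw (letf s l0 l1) w)))"

fun wfun :: "(nat \<Rightarrow> 'v \<Rightarrow> 'v) \<Rightarrow> ('v \<Rightarrow> 'l set) \<Rightarrow> ('v \<Rightarrow> 'l set) \<Rightarrow> ('a \<times> bool) list \<Rightarrow> 'v \<times> 'l set \<Rightarrow> 'v \<times> 'l set" where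
  "wfun s l0 l1 [] st = st"
| "wfun s l0 l1 (l # w) st = (if snd l then letf s l0 l1 (fst l) else letfi s l0 l1 (fst l)) (wfun s l0 l1 w st)"

fun vfun :: "(nat \<Rightarrow> 'v \<Rightarrow> 'v) \<Rightarrow> ('a \<times> bool) list \<Rightarrow> 'v \<Rightarrow> 'v" where
  "vfun s [] v = v"
| "vfun s (l # w) v = (if fst l = a then s (if snd l then 0 else 2) (vfun s w v)
     else if fst l = b then s (if snd l then 1 else 3) (vfun s w v) else vfun s w v)"

context
  fixes s :: "nat \<Rightarrow> 'v \<Rightarrow> 'v" and l0 l1 :: "'v \<Rightarrow> 'l set"
  assumes cov: "cover s"
begin

lemma letf_bij: "letf s l0 l1 x \<in> carrier BG" "letfi s l0 l1 x \<in> carrier BG"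
  using cact_inv[OF cov, of l0 l1] o_bij
  by (auto simp: BG_carrier letf_def letfi_def)

lemma letter_BG: "letter_val BG (letf s l0 l1 x, t) = (if t then letf s l0 l1 x else letfi s l0 l1 x)"
proof (cases t)
  case True then show ?thesis by (simp add: letter_val_def)
next
  case False
  have "inv\<^bsub>BG\<^esub> (letf s l0 l1 x) = letfi s l0 l1 x"
    using cact_inv[OF cov, of l0 l1] by (auto simp: letf_def letfi_def intro!: BG_inv)
  then show ?thesis using False by (simp add: letter_val_def)
qed

lemma psi_prop:
  "psi s l0 l1 \<in> hom F BG \<and>
   (\<forall>w. set (map fst w) \<subseteq> B \<longrightarrow> psi s l0 l1 (word_val F w) = word_val BG (mapw (letf s l0 l1) w))"
proof -
  have f: "letf s l0 l1 ` B \<subseteq> carrier BG" using letf_bij by auto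
  obtain \<psi> where "\<psi> \<in> hom F BG"
    "\<And>w. set (map fst w) \<subseteq> B \<Longrightarrow> \<psi> (word_val F w) = word_val BG (mapw (letf s l0 l1) w)"
    using free_hom[OF grp fb BG_group f] by blast
  then have ex: "\<exists>\<psi>. \<psi> \<in> hom F BG \<and>
      (\<forall>w. set (map fst w) \<subseteq> B \<longrightarrow> \<psi> (word_val F w) = word_val BG (mapw (letf s l0 l1) w))"
    by blast
  show ?thesis unfolding psi_def by (rule someI_ex[OF ex])
qed

lemma psi_hom: "psi s l0 l1 \<in> hom F BG" using psi_prop by blast

lemma wordBG: "word_val BG (mapw (letf s l0 l1) w) = wfun s l0 l1 w \<and> wfun s l0 l1 w \<in> carrier BG"
proof (induction w)
  case Nil then show ?case using bij_id by (simp add: mapw_def BG_one fun_eq_iff BG_carrier id_def)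
next
  case (Cons l w)
  define Xf where "Xf = (if snd l then letf s l0 l1 (fst l) else letfi s l0 l1 (fst l))"
  have ih1: "word_val BG (mapw (letf s l0 l1) w) = wfun s l0 l1 w" using Cons.IH by blast
  have ih2: "wfun s l0 l1 w \<in> carrier BG" using Cons.IH by blast
  have Xf: "Xf \<in> carrier BG" unfolding Xf_def by (cases "snd l") (simp_all add: letf_bij)
  have "word_val BG (mapw (letf s l0 l1) (l # w)) =
        letter_val BG (letf s l0 l1 (fst l), snd l) \<otimes>\<^bsub>BG\<^esub> word_val BG (mapw (letf s l0 l1) w)"
    by (simp add: mapw_def)
  also have "\<dots> = Xf \<otimes>\<^bsub>BG\<^esub> wfun s l0 l1 w" unfolding ih1 letter_BG Xf_def by simp
  also have "\<dots> = Xf \<circ> wfun s l0 l1 w" using Xf ih2 by (rule BG_mult)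
  finally have e: "word_val BG (mapw (letf s l0 l1) (l # w)) = Xf \<circ> wfun s l0 l1 w" .
  have "Xf \<otimes>\<^bsub>BG\<^esub> wfun s l0 l1 w \<in> carrier BG" by (rule monoid.m_closed[OF BGmon Xf ih2])
  then have c: "Xf \<circ> wfun s l0 l1 w \<in> carrier BG" using BG_mult[OF Xf ih2] by simp
  have w: "wfun s l0 l1 (l # w) = Xf \<circ> wfun s l0 l1 w" unfolding Xf_def by (simp add: fun_eq_iff)
  show ?case
  proof
    show "word_val BG (mapw (letf s l0 l1) (l # w)) = wfun s l0 l1 (l # w)" using e w by simp
    show "wfun s l0 l1 (l # w) \<in> carrier BG" unfolding w by (rule c)
  qed
qed

lemma psi_word: "set (map fst w) \<subseteq> B \<Longrightarrow> psi s l0 l1 (word_val F w) = wfun s l0 l1 w"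
  using psi_prop wordBG by auto

lemma carrier_word: "g \<in> carrier F \<Longrightarrow> \<exists>w. set (map fst w) \<subseteq> B \<and> word_val F w = g"
  using group.gen_word[OF grp BF] genB by blast

lemma wfun_enc: "\<forall>c\<in>set cs. c < 4 \<Longrightarrow> wfun s l0 l1 (enc a b cs) = wact s l0 l1 cs"
proof (induction cs)
  case Nil then show ?case by (simp add: enc_def fun_eq_iff)
next
  case (Cons c cs)
  have "c = 0 \<or> c = 1 \<or> c = 2 \<or> c = 3" using Cons.prems by auto
  then show ?case using Cons ab
    by (auto simp: enc_Cons encl_def letf_def letfi_def fun_eq_iff)
qed

lemma enc_B: "set (map fst (enc a b cs)) \<subseteq> B"
  using aB bB by (auto simp: enc_def)

lemma psi_enc: "\<forall>c\<in>set cs. c < 4 \<Longrightarrow> psi s l0 l1 (word_val F (enc a b cs)) = wact s l0 l1 cs"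
  using psi_word[OF enc_B] wfun_enc by simp

lemma wfun_aff: "aff (wfun s l0 l1 w)"
proof (induction w)
  case Nil
  show ?case by (simp add: aff_def)
next
  case (Cons l w)
  have e: "wfun s l0 l1 (l # w) = (if snd l then letf s l0 l1 (fst l) else letfi s l0 l1 (fst l)) \<circ> wfun s l0 l1 w"
    by (simp add: fun_eq_iff)
  have a1: "aff (if snd l then letf s l0 l1 (fst l) else letfi s l0 l1 (fst l))"
    by (auto simp: letf_def letfi_def aff_cact aff_id)
  have "aff ((if snd l then letf s l0 l1 (fst l) else letfi s l0 l1 (fst l)) \<circ> wfun s l0 l1 w)"
    using a1 Cons.IH by (rule aff_comp)
  then show ?case by (simp only: e)
qed

lemma psi_aff: "g \<in> carrier F \<Longrightarrow> aff (psi s l0 l1 g)"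
proof -
  assume "g \<in> carrier F"
  then obtain w where "set (map fst w) \<subseteq> B" "word_val F w = g" using carrier_word by blast
  then show ?thesis using psi_word[of w] wfun_aff[of w] by simp
qed

lemma psi_carrier: "g \<in> carrier F \<Longrightarrow> psi s l0 l1 g \<in> carrier BG"
  using psi_hom by (auto simp: hom_def)

lemma psi_mult: "g \<in> carrier F \<Longrightarrow> h \<in> carrier F \<Longrightarrow> psi s l0 l1 (g \<otimes>\<^bsub>F\<^esub> h) = psi s l0 l1 g \<circ> psi s l0 l1 h"
  using psi_hom psi_carrier by (simp add: hom_mult BG_mult)

lemma psi_one: "psi s l0 l1 \<one>\<^bsub>F\<^esub> = id"
proof -
  interpret gh: group_hom F BG "psi s l0 l1"
    using grp BG_group psi_hom by (simp add: group_hom_def group_hom_axioms_def)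
  show ?thesis using gh.hom_one BG_one by simp
qed

lemma psi_inv: "g \<in> carrier F \<Longrightarrow> psi s l0 l1 (inv\<^bsub>F\<^esub> g) (psi s l0 l1 g st) = st"
proof -
  assume g: "g \<in> carrier F"
  have "psi s l0 l1 (inv\<^bsub>F\<^esub> g \<otimes>\<^bsub>F\<^esub> g) = id"
    using g by (simp add: group.l_inv[OF grp] psi_one)
  moreover have "psi s l0 l1 (inv\<^bsub>F\<^esub> g \<otimes>\<^bsub>F\<^esub> g) = psi s l0 l1 (inv\<^bsub>F\<^esub> g) \<circ> psi s l0 l1 g"
    using g group.inv_closed[OF grp] psi_mult by blast
  ultimately have "psi s l0 l1 (inv\<^bsub>F\<^esub> g) \<circ> psi s l0 l1 g = id" by simp
  from fun_cong[OF this, of st] show ?thesis by simp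
qed

lemma wfun_vertex: "fst (wfun s l0 l1 w (v, U0)) = vfun s w v"
  by (induction w) (use ab in \<open>auto simp: letf_def letfi_def cact_def\<close>)

lemma psi_vertex: "set (map fst w) \<subseteq> B \<Longrightarrow> fst (psi s l0 l1 (word_val F w) (v, U0)) = vfun s w v"
  using psi_word wfun_vertex by simp

definition Qs :: "'v \<Rightarrow> 'a set" where
  "Qs v0 = {g \<in> carrier F. fst (psi s l0 l1 g (v0, {})) = v0}"

definition chi :: "'v \<Rightarrow> 'a \<Rightarrow> 'l set" where
  "chi v0 g = snd (psi s l0 l1 g (v0, {}))"

lemma Q_act: "g \<in> Qs v0 \<Longrightarrow> psi s l0 l1 g (v0, U0) = (v0, symd U0 (chi v0 g))"
proof -
  assume g: "g \<in> Qs v0"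
  then have gc: "g \<in> carrier F" and f: "fst (psi s l0 l1 g (v0, {})) = v0" by (auto simp: Qs_def)
  have "psi s l0 l1 g (v0, U0) = (fst (psi s l0 l1 g (v0, {})), symd U0 (snd (psi s l0 l1 g (v0, {}))))"
    using psi_aff[OF gc] unfolding aff_def by blast
  then show ?thesis using f by (simp add: chi_def)
qed

lemma Q_mult: "g \<in> Qs v0 \<Longrightarrow> h \<in> Qs v0 \<Longrightarrow> g \<otimes>\<^bsub>F\<^esub> h \<in> Qs v0 \<and> chi v0 (g \<otimes>\<^bsub>F\<^esub> h) = symd (chi v0 h) (chi v0 g)"
proof -
  assume g: "g \<in> Qs v0" and h: "h \<in> Qs v0"
  have gc: "g \<in> carrier F" and hc: "h \<in> carrier F" using g h by (auto simp: Qs_def)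
  have "psi s l0 l1 (g \<otimes>\<^bsub>F\<^esub> h) (v0, {}) = (v0, symd (chi v0 h) (chi v0 g))"
    using psi_mult[OF gc hc] Q_act[OF g] Q_act[OF h] by simp
  then show ?thesis using gc hc monoid.m_closed[OF Fmon] by (auto simp: Qs_def chi_def)
qed

lemma Q_inv: "g \<in> Qs v0 \<Longrightarrow> inv\<^bsub>F\<^esub> g \<in> Qs v0 \<and> chi v0 (inv\<^bsub>F\<^esub> g) = chi v0 g"
proof -
  assume g: "g \<in> Qs v0"
  have gc: "g \<in> carrier F" using g by (auto simp: Qs_def)
  have ic: "inv\<^bsub>F\<^esub> g \<in> carrier F" using gc group.inv_closed[OF grp] by blast
  have "psi s l0 l1 (inv\<^bsub>F\<^esub> g) (v0, chi v0 g) = (v0, {})"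
    using psi_inv[OF gc, of "(v0, {})"] Q_act[OF g, of "{}"] by simp
  moreover have "psi s l0 l1 (inv\<^bsub>F\<^esub> g) (v0, chi v0 g) =
     (fst (psi s l0 l1 (inv\<^bsub>F\<^esub> g) (v0, {})), symd (chi v0 g) (chi v0 (inv\<^bsub>F\<^esub> g)))"
    using psi_aff[OF ic] unfolding aff_def chi_def by blast
  ultimately show ?thesis using ic by (auto simp: Qs_def symd_eq_empty)
qed

lemma Q_one: "\<one>\<^bsub>F\<^esub> \<in> Qs v0 \<and> chi v0 \<one>\<^bsub>F\<^esub> = {}"
  using psi_one monoid.one_closed[OF Fmon] by (simp add: Qs_def chi_def)

lemma gen_Q:
  assumes S: "S \<subseteq> Qs v0" and g: "g \<in> generate F S"
  shows "g \<in> Qs v0 \<and> chi v0 g \<in> sp (chi v0 ` S)"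
  using g
proof induction
  case one then show ?case using Q_one by (simp add: sp.intros)
next
  case (incl h) then show ?case using S by (auto intro: sp_base)
next
  case (inv h)
  then have "h \<in> Qs v0" using S by blast
  then show ?case using Q_inv[of h v0] inv by (auto intro: sp_base)
next
  case (eng h1 h2)
  then have "h1 \<otimes>\<^bsub>F\<^esub> h2 \<in> Qs v0 \<and> chi v0 (h1 \<otimes>\<^bsub>F\<^esub> h2) = symd (chi v0 h2) (chi v0 h1)"
    using Q_mult by blast
  then show ?case using eng sp_closed by auto
qed

lemma gen_Q_sub: "S \<subseteq> Qs v0 \<Longrightarrow> generate F S \<subseteq> Qs v0"
  using gen_Q by blast

lemma rank_lb:
  assumes J: "J \<subseteq> Qs v0" and R: "finite R" and sing: "\<forall>r\<in>R. \<exists>g\<in>J. chi v0 g = {r}"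
    and S: "S \<subseteq> J" "generate F S = J" "finite S"
  shows "card R \<le> card S"
proof -
  have SQ: "S \<subseteq> Qs v0" using S J by blast
  have P: "U \<in> chi v0 ` J" if "U \<subseteq> R" for U
  proof -
    have "finite U" using that R finite_subset by blast
    then show ?thesis using that
    proof (induction rule: finite_induct)
      case empty
      have "\<one>\<^bsub>F\<^esub> \<in> generate F S" by (rule generate.one)
      then have o: "\<one>\<^bsub>F\<^esub> \<in> J" using S(2) by simp
      have "chi v0 \<one>\<^bsub>F\<^esub> = {}" using Q_one by blast
      then show ?case using o by (metis image_eqI)
    next
      case (insert r U)
      have rR: "r \<in> R" using insert.prems by blast
      have UR: "U \<subseteq> R" using insert.prems by blast
      obtain g where g: "g \<in> J" "chi v0 g = {r}" using sing rR by blast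
      obtain h where h: "h \<in> J" "chi v0 h = U" using insert.IH UR by blast
      have "g \<otimes>\<^bsub>F\<^esub> h \<in> generate F S" using g(1) h(1) S(2) by (metis generate.eng)
      then have gh: "g \<otimes>\<^bsub>F\<^esub> h \<in> J" using S(2) by simp
      have gQ: "g \<in> Qs v0" using g J by blast
      have hQ: "h \<in> Qs v0" using h J by blast
      have "chi v0 (g \<otimes>\<^bsub>F\<^esub> h) = symd (chi v0 h) (chi v0 g)" using Q_mult[OF gQ hQ] by blast
      also have "\<dots> = symd U {r}" using g h by simp
      also have "\<dots> = insert r U" using insert.hyps(2) by (rule symd_insert)
      finally show ?case using gh by (metis image_eqI)
    qed
  qed
  have sub1: "Pow R \<subseteq> chi v0 ` J" using P by blast
  have sub2: "chi v0 ` J \<subseteq> sp (chi v0 ` S)"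
  proof
    fix y assume "y \<in> chi v0 ` J"
    then obtain g where g: "g \<in> J" "y = chi v0 g" by blast
    then have "g \<in> generate F S" using S(2) by simp
    then show "y \<in> sp (chi v0 ` S)" using gen_Q[OF SQ] g(2) by blast
  qed
  have sub: "Pow R \<subseteq> sp (chi v0 ` S)" using sub1 sub2 by (rule subset_trans)
  have fs: "finite (sp (chi v0 ` S))" "card (sp (chi v0 ` S)) \<le> 2 ^ card (chi v0 ` S)"
    using sp_card[of "chi v0 ` S"] S(3) by auto
  have "(2::nat) ^ card R = card (Pow R)" using R by (simp add: card_Pow)
  also have "\<dots> \<le> card (sp (chi v0 ` S))" using fs(1) sub by (rule card_mono)
  also have "\<dots> \<le> 2 ^ card (chi v0 ` S)" using fs(2) .
  also have "\<dots> \<le> 2 ^ card S" using card_image_le[OF S(3)] by (intro power_increasing) auto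
  finally show ?thesis by simp
qed

end

lemma vfun_prod:
  assumes "\<And>c v u. sI c (v, u) = (sH c v, sK c u)"
  shows "vfun sI w (v, u) = (vfun sH w v, vfun sK w u)"
  by (induction w) (auto simp: assms)

end

definition combS :: "nat \<Rightarrow> nat list \<Rightarrow> nat list \<Rightarrow> nat list \<Rightarrow> nat list \<Rightarrow> nat \<Rightarrow> nat + int \<Rightarrow> nat + int" where
"combS n P0 P1 P2 P3 c v = (case v of
   Inl i \<Rightarrow> if n \<le> i then Inl i else
     (if c = 0 then Inl (P0!i) else if c = 2 then Inl (P2!i)
      else if c = 1 then (if i = P3!0 then Inr 0 else Inl (P1!i))
      else (if i = 0 then Inr 0 else Inl (P3!i)))
 | Inr j \<Rightarrow> (if c = 0 then Inr (j - 1) else if c = 2 then Inr (j + 1)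
      else if c = 1 then (if j = 0 then Inl 0 else Inr j)
      else (if j = 0 then Inl (P3!0) else Inr j)))"

definition tabs_ok :: "nat \<Rightarrow> nat list \<Rightarrow> nat list \<Rightarrow> nat list \<Rightarrow> nat list \<Rightarrow> bool" where
 "tabs_ok n P0 P1 P2 P3 \<longleftrightarrow> 0 < n \<and> (\<forall>i<n. P0!i < n \<and> P1!i < n \<and> P2!i < n \<and> P3!i < n \<and>
     P2!(P0!i) = i \<and> P0!(P2!i) = i \<and> P3!(P1!i) = i \<and> P1!(P3!i) = i)"

lemma combS_cover:
  assumes ok: "tabs_ok n P0 P1 P2 P3"
  shows "cover (combS n P0 P1 P2 P3)"
  unfolding cover_def
proof (intro allI)
  fix v
  let ?s = "combS n P0 P1 P2 P3"
  have n0: "0 < n" using ok by (simp add: tabs_ok_def)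
  have T: "\<And>i. i < n \<Longrightarrow> P0!i < n \<and> P1!i < n \<and> P2!i < n \<and> P3!i < n \<and>
     P2!(P0!i) = i \<and> P0!(P2!i) = i \<and> P3!(P1!i) = i \<and> P1!(P3!i) = i"
    using ok by (simp add: tabs_ok_def)
  have N0: "P3!0 < n" using T[OF n0] by simp
  have P10: "P1!(P3!0) = 0" using T[OF n0] by simp
  show "?s 2 (?s 0 v) = v \<and> ?s 0 (?s 2 v) = v \<and> ?s 3 (?s 1 v) = v \<and> ?s 1 (?s 3 v) = v"
  proof (cases v)
    case (Inl i)
    show ?thesis
    proof (cases "i < n")
      case True
      note Ti = T[OF True]
      have a1: "?s 2 (?s 0 v) = v" using Inl True Ti by (simp add: combS_def)
      have a2: "?s 0 (?s 2 v) = v" using Inl True Ti by (simp add: combS_def)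
      have a3: "?s 3 (?s 1 v) = v"
      proof (cases "i = P3!0")
        case True
        then show ?thesis using Inl \<open>i < n\<close> n0 P10 by (simp add: combS_def)
      next
        case False
        have "P1!i \<noteq> 0" using False Ti by metis
        then show ?thesis using Inl \<open>i < n\<close> Ti False by (simp add: combS_def)
      qed
      have a4: "?s 1 (?s 3 v) = v"
      proof (cases "i = 0")
        case True
        then show ?thesis using Inl \<open>i < n\<close> N0 by (simp add: combS_def)
      next
        case False
        have "P3!i \<noteq> P3!0" using False Ti T[OF n0] by metis
        then show ?thesis using Inl \<open>i < n\<close> Ti False by (simp add: combS_def)
      qed
      show ?thesis using a1 a2 a3 a4 by blast
    next
      case False
      then show ?thesis using Inl by (simp add: combS_def)
    qed
  next
    case (Inr j)
    show ?thesis using Inr n0 N0 P10 by (simp add: combS_def)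
  qed
qed

definition lk :: "('k \<times> 'l set) list \<Rightarrow> 'k \<Rightarrow> 'l set" where
  "lk L k = (case map_of L k of Some U \<Rightarrow> U | None \<Rightarrow> {})"

definition combL0 :: "(nat \<times> nat set) list \<Rightarrow> nat + int \<Rightarrow> nat set" where
  "combL0 L v = (case v of Inl i \<Rightarrow> lk L i | Inr j \<Rightarrow> {})"

definition combL1 :: "(nat \<times> nat set) list \<Rightarrow> nat + int \<Rightarrow> nat set" where
  "combL1 L v = (case v of Inl i \<Rightarrow> lk L i | Inr j \<Rightarrow> (if 0 < j then {100 + nat j} else {}))"

definition prodS :: "(nat \<Rightarrow> 'v \<Rightarrow> 'v) \<Rightarrow> (nat \<Rightarrow> 'u \<Rightarrow> 'u) \<Rightarrow> nat \<Rightarrow> 'v \<times> 'u \<Rightarrow> 'v \<times> 'u" where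
  "prodS s1 s2 c x = (s1 c (fst x), s2 c (snd x))"

lemma prodS_cover: "cover s1 \<Longrightarrow> cover s2 \<Longrightarrow> cover (prodS s1 s2)"
  by (simp add: cover_def prodS_def)

definition prodL0 :: "((nat \<times> nat) \<times> nat set) list \<Rightarrow> (nat + int) \<times> (nat + int) \<Rightarrow> nat set" where
  "prodL0 L x = (case x of (Inl i, Inl j) \<Rightarrow> lk L (i, j) | _ \<Rightarrow> {})"

definition prodL1 :: "((nat \<times> nat) \<times> nat set) list \<Rightarrow> (nat + int) \<times> (nat + int) \<Rightarrow> nat set" where
  "prodL1 L x = (case x of (Inl i, Inl j) \<Rightarrow> lk L (i, j)
     | (Inr i, Inr j) \<Rightarrow> (if i = j \<and> 0 < i then {100 + nat i} else {}) | _ \<Rightarrow> {})"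

definition zw :: "nat \<Rightarrow> nat list" where
  "zw j = [1] @ replicate j 0 @ [1] @ replicate j 2 @ [3]"

lemma zw_codes: "\<forall>c\<in>set (zw j). c < 4"
  by (auto simp: zw_def)

lemma comb_rep2:
  "wact (combS n P0 P1 P2 P3) (combL0 LA) (combL1 LB) (replicate j 2) (Inr k, U0) = (Inr (k + int j), U0)"
  by (induction j) (auto simp: cact_def lab_def combS_def combL0_def)

lemma comb_rep0:
  "wact (combS n P0 P1 P2 P3) (combL0 LA) (combL1 LB) (replicate j 0) (Inr (k + int j), U0) = (Inr k, U0)"
proof (induction j)
  case 0 then show ?case by simp
next
  case (Suc j)
  have "wact (combS n P0 P1 P2 P3) (combL0 LA) (combL1 LB) (replicate (Suc j) 0) (Inr (k + int (Suc j)), U0)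
     = wact (combS n P0 P1 P2 P3) (combL0 LA) (combL1 LB) (replicate j 0)
         (cact (combS n P0 P1 P2 P3) (combL0 LA) (combL1 LB) 0 (Inr (k + int (Suc j)), U0))"
  proof -
    have "replicate (Suc j) (0::nat) = replicate j 0 @ [0]" by (simp add: replicate_append_same)
    then show ?thesis by (simp only: wact_append) simp
  qed
  also have "cact (combS n P0 P1 P2 P3) (combL0 LA) (combL1 LB) 0 (Inr (k + int (Suc j)), U0) = (Inr (k + int j), U0)"
    by (simp add: cact_def lab_def combS_def combL0_def)
  finally show ?case using Suc by simp
qed

lemma comb_z:
  assumes "0 < n" "0 < j"
  shows "wact (combS n P0 P1 P2 P3) (combL0 LA) (combL1 LB) (zw j) (Inl 0, {}) = (Inl 0, {100 + j})"
proof -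
  let ?w = "wact (combS n P0 P1 P2 P3) (combL0 LA) (combL1 LB)"
  have s1: "?w [3] (Inl 0, {}) = (Inr 0, {})"
    using assms by (simp add: cact_def lab_def combS_def combL1_def)
  have s2: "?w (replicate j 2) (Inr 0, {}) = (Inr (int j), {})"
    using comb_rep2[of n P0 P1 P2 P3 LA LB j 0 "{}"] by simp
  have s3: "?w [1] (Inr (int j), {}) = (Inr (int j), {100 + j})"
    using assms by (simp add: cact_def lab_def combS_def combL1_def)
  have s4: "?w (replicate j 0) (Inr (int j), {100 + j}) = (Inr 0, {100 + j})"
    using comb_rep0[of n P0 P1 P2 P3 LA LB j 0 "{100 + j}"] by simp
  have s5: "?w [1] (Inr 0, {100 + j}) = (Inl 0, {100 + j})"
    by (simp add: cact_def lab_def combS_def combL1_def)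
  show ?thesis unfolding zw_def wact_append using s1 s2 s3 s4 s5 by simp
qed


lemma prod_rep2:
  "wact (prodS (combS n P0 P1 P2 P3) (combS n' Q0 Q1 Q2 Q3)) (prodL0 LA) (prodL1 LB) (replicate j 2) ((Inr k, Inr k), U0) = ((Inr (k + int j), Inr (k + int j)), U0)"
  by (induction j) (auto simp: cact_def lab_def combS_def prodS_def prodL0_def)

lemma prod_rep0:
  "wact (prodS (combS n P0 P1 P2 P3) (combS n' Q0 Q1 Q2 Q3)) (prodL0 LA) (prodL1 LB) (replicate j 0) ((Inr (k + int j), Inr (k + int j)), U0) = ((Inr k, Inr k), U0)"
proof (induction j)
  case 0 then show ?case by simp
next
  case (Suc j)
  let ?w = "wact (prodS (combS n P0 P1 P2 P3) (combS n' Q0 Q1 Q2 Q3)) (prodL0 LA) (prodL1 LB)"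
  let ?c = "cact (prodS (combS n P0 P1 P2 P3) (combS n' Q0 Q1 Q2 Q3)) (prodL0 LA) (prodL1 LB)"
  have "replicate (Suc j) (0::nat) = replicate j 0 @ [0]" by (simp add: replicate_append_same)
  then have "?w (replicate (Suc j) 0) ((Inr (k + int (Suc j)), Inr (k + int (Suc j))), U0)
     = ?w (replicate j 0) (?c 0 ((Inr (k + int (Suc j)), Inr (k + int (Suc j))), U0))"
    by (simp only: wact_append) simp
  also have "?c 0 ((Inr (k + int (Suc j)), Inr (k + int (Suc j))), U0) = ((Inr (k + int j), Inr (k + int j)), U0)"
    by (simp add: cact_def lab_def combS_def prodS_def prodL0_def)
  finally show ?case using Suc by simp
qed

lemma prod_z:
  assumes "0 < n" "0 < n'" "0 < j"
  shows "wact (prodS (combS n P0 P1 P2 P3) (combS n' Q0 Q1 Q2 Q3)) (prodL0 LA) (prodL1 LB) (zw j) ((Inl 0, Inl 0), {}) = ((Inl 0, Inl 0), {100 + j})"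
proof -
  let ?w = "wact (prodS (combS n P0 P1 P2 P3) (combS n' Q0 Q1 Q2 Q3)) (prodL0 LA) (prodL1 LB)"
  have s1: "?w [3] ((Inl 0, Inl 0), {}) = ((Inr 0, Inr 0), {})"
    using assms by (simp add: cact_def lab_def combS_def prodS_def prodL1_def)
  have s2: "?w (replicate j 2) ((Inr 0, Inr 0), {}) = ((Inr (int j), Inr (int j)), {})"
    using prod_rep2[of n P0 P1 P2 P3 n' Q0 Q1 Q2 Q3 LA LB j 0 "{}"] by simp
  have s3: "?w [1] ((Inr (int j), Inr (int j)), {}) = ((Inr (int j), Inr (int j)), {100 + j})"
    using assms by (simp add: cact_def lab_def combS_def prodS_def prodL1_def)
  have s4: "?w (replicate j 0) ((Inr (int j), Inr (int j)), {100 + j}) = ((Inr 0, Inr 0), {100 + j})"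
    using prod_rep0[of n P0 P1 P2 P3 n' Q0 Q1 Q2 Q3 LA LB j 0 "{100 + j}"] by simp
  have s5: "?w [1] ((Inr 0, Inr 0), {100 + j}) = ((Inl 0, Inl 0), {100 + j})"
    by (simp add: cact_def lab_def combS_def prodS_def prodL1_def)
  show ?thesis unfolding zw_def wact_append using s1 s2 s3 s4 s5 by simp
qed

definition sH :: "nat \<Rightarrow> nat + int \<Rightarrow> nat + int" where
  "sH = combS 16 [1, 0, 3, 2, 11, 5, 15, 4, 14, 13, 6, 7, 9, 10, 8, 12] [0, 2, 1, 14, 3, 12, 7, 4, 8, 5, 6, 10, 9, 15, 13, 11] [1, 0, 3, 2, 7, 5, 10, 11, 14, 12, 13, 4, 15, 9, 8, 6] [0, 2, 1, 4, 7, 9, 10, 6, 8, 12, 11, 15, 5, 14, 3, 13]"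

lemma okH: "tabs_ok 16 [1, 0, 3, 2, 11, 5, 15, 4, 14, 13, 6, 7, 9, 10, 8, 12] [0, 2, 1, 14, 3, 12, 7, 4, 8, 5, 6, 10, 9, 15, 13, 11] [1, 0, 3, 2, 7, 5, 10, 11, 14, 12, 13, 4, 15, 9, 8, 6] [0, 2, 1, 4, 7, 9, 10, 6, 8, 12, 11, 15, 5, 14, 3, 13]"
  by (simp add: tabs_ok_def less_Suc_eq numeral_eq_Suc)

definition laH :: "nat + int \<Rightarrow> nat set" where "laH = combL0 [(5, {1}), (6, {5}), (14, {3})]"

definition lbH :: "nat + int \<Rightarrow> nat set" where "lbH = combL1 [(5, {4}), (10, {2})]"

definition sK :: "nat \<Rightarrow> nat + int \<Rightarrow> nat + int" where
  "sK = combS 8 [1, 0, 7, 3, 4, 5, 2, 6] [0, 6, 5, 2, 3, 4, 1, 7] [1, 0, 6, 3, 4, 5, 7, 2] [0, 6, 3, 4, 5, 2, 1, 7]"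

lemma okK: "tabs_ok 8 [1, 0, 7, 3, 4, 5, 2, 6] [0, 6, 5, 2, 3, 4, 1, 7] [1, 0, 6, 3, 4, 5, 7, 2] [0, 6, 3, 4, 5, 2, 1, 7]"
  by (simp add: tabs_ok_def less_Suc_eq numeral_eq_Suc)

definition laK :: "nat + int \<Rightarrow> nat set" where "laK = combL0 [(2, {4}), (3, {1}), (5, {3})]"

definition lbK :: "nat + int \<Rightarrow> nat set" where "lbK = combL1 [(5, {2}), (7, {5})]"

definition sJ :: "nat \<Rightarrow> nat + int \<Rightarrow> nat + int" where
  "sJ = combS 7 [2, 6, 0, 1, 4, 5, 3] [0, 1, 6, 5, 2, 3, 4] [2, 3, 0, 6, 4, 5, 1] [0, 1, 4, 5, 6, 3, 2]"

lemma okJ: "tabs_ok 7 [2, 6, 0, 1, 4, 5, 3] [0, 1, 6, 5, 2, 3, 4] [2, 3, 0, 6, 4, 5, 1] [0, 1, 4, 5, 6, 3, 2]"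
  by (simp add: tabs_ok_def less_Suc_eq numeral_eq_Suc)

definition laJ :: "nat + int \<Rightarrow> nat set" where "laJ = combL0 [(3, {5}), (4, {1}), (5, {2})]"

definition lbJ :: "nat + int \<Rightarrow> nat set" where "lbJ = combL1 [(1, {6}), (3, {2, 4}), (6, {3})]"

definition laI :: "(nat + int) \<times> (nat + int) \<Rightarrow> nat set" where "laI = prodL0 [((4, 5), {5}), ((14, 3), {3}), ((14, 5), {4})]"

definition lbI :: "(nat + int) \<times> (nat + int) \<Rightarrow> nat set" where "lbI = prodL1 [((4, 5), {1}), ((10, 2), {2})]"

definition sI :: "nat \<Rightarrow> (nat + int) \<times> (nat + int) \<Rightarrow> (nat + int) \<times> (nat + int)" where "sI = prodS sH sK"

definition WH :: "nat list list" where
  "WH = [[0, 3, 2, 3, 3, 0, 3, 0, 1, 2, 1, 1, 0, 1, 2], [0, 3, 2, 1, 1, 1, 1, 1, 0, 3, 0, 1, 2], [0, 3, 2, 3, 0, 0, 1, 0, 1, 2], [0, 3, 2, 3, 3, 0, 1, 1, 1, 2, 1, 1, 0, 1, 2], [0, 3, 2, 3, 3, 3, 0, 3, 3, 3, 0, 1, 2]]"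

definition WK :: "nat list list" where
  "WK = [[0, 3, 2, 1, 0, 3, 0, 1, 2], [0, 3, 2, 1, 1, 1, 1, 0, 1, 2], [0, 3, 2, 3, 0, 1, 0, 1, 2], [0, 3, 0, 0, 0, 1, 2], [0, 3, 0, 1, 2, 1, 2]]"

definition WI :: "nat list list" where
  "WI = [[0, 3, 2, 1, 1, 1, 2, 1, 1, 1, 1, 1, 1, 2, 1, 1, 1, 0, 1, 2], [0, 3, 2, 1, 1, 1, 1, 1, 0, 3, 0, 1, 2], [0, 3, 2, 1, 1, 1, 2, 1, 1, 0, 0, 3, 3, 0, 3, 3, 3, 0, 1, 2], [0, 3, 2, 3, 0, 0, 1, 0, 1, 2], [0, 3, 2, 3, 3, 3, 0, 1, 1, 0, 1, 1, 2, 1, 1, 1, 0, 1, 2]]"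

definition EH :: "(nat \<times> bool) list list" where
  "EH = [[(4, False), (4, False)], [(1, True)], [(4, False), (2, True), (4, True)], [(2, True)], [(4, True), (1, True), (4, False)]]"

definition EK :: "(nat \<times> bool) list list" where
  "EK = [[(1, True), (2, False), (1, True), (0, False), (1, True)], [(1, True), (0, True)], [(1, True), (2, False), (0, True), (0, True), (2, True), (1, False)], [(2, True), (2, True)], [(1, False), (0, True), (1, True), (2, True), (0, False), (1, True)]]"

lemma covH: "cover sH" unfolding sH_def by (rule combS_cover[OF okH])
lemma covK: "cover sK" unfolding sK_def by (rule combS_cover[OF okK])
lemma covJ: "cover sJ" unfolding sJ_def by (rule combS_cover[OF okJ])
lemma covI: "cover sI" unfolding sI_def by (rule prodS_cover[OF covH covK])

lemma codesWH: "i < 5 \<Longrightarrow> \<forall>c\<in>set (WH ! i). c < 4"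
proof -
  assume "i < 5"
  then have "i = 0 \<or> i = 1 \<or> i = 2 \<or> i = 3 \<or> i = 4" by arith
  then show ?thesis by (auto simp: WH_def)
qed

lemma codesWK: "i < 5 \<Longrightarrow> \<forall>c\<in>set (WK ! i). c < 4"
proof -
  assume "i < 5"
  then have "i = 0 \<or> i = 1 \<or> i = 2 \<or> i = 3 \<or> i = 4" by arith
  then show ?thesis by (auto simp: WK_def)
qed

lemma codesWI: "i < 5 \<Longrightarrow> \<forall>c\<in>set (WI ! i). c < 4"
proof -
  assume "i < 5"
  then have "i = 0 \<or> i = 1 \<or> i = 2 \<or> i = 3 \<or> i = 4" by arith
  then show ?thesis by (auto simp: WI_def)
qed

lemma expr_red_H: "i < 5 \<Longrightarrow> WI ! i = creduce (concat (map (\<lambda>(j, t). if t then WH ! j else invc (WH ! j)) (EH ! i)))"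
proof -
  assume "i < 5"
  then have "i = 0 \<or> i = 1 \<or> i = 2 \<or> i = 3 \<or> i = 4" by arith
  then show ?thesis by (auto simp: WI_def WH_def EH_def creduce_def invc_def)
qed

lemma expr_red_K: "i < 5 \<Longrightarrow> WI ! i = creduce (concat (map (\<lambda>(j, t). if t then WK ! j else invc (WK ! j)) (EK ! i)))"
proof -
  assume "i < 5"
  then have "i = 0 \<or> i = 1 \<or> i = 2 \<or> i = 3 \<or> i = 4" by arith
  then show ?thesis by (auto simp: WI_def WK_def EK_def creduce_def invc_def)
qed

lemma EH_idx: "i < 5 \<Longrightarrow> \<forall>(j, t)\<in>set (EH ! i). j < 5"
proof -
  assume "i < 5"
  then have "i = 0 \<or> i = 1 \<or> i = 2 \<or> i = 3 \<or> i = 4" by arith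
  then show ?thesis by (auto simp: EH_def)
qed

lemma EK_idx: "i < 5 \<Longrightarrow> \<forall>(j, t)\<in>set (EK ! i). j < 5"
proof -
  assume "i < 5"
  then have "i = 0 \<or> i = 1 \<or> i = 2 \<or> i = 3 \<or> i = 4" by arith
  then show ?thesis by (auto simp: EK_def)
qed

lemmas evsimps = sH_def sK_def sJ_def laH_def lbH_def laK_def lbK_def laJ_def lbJ_def laI_def lbI_def
  sI_def prodS_def combS_def combL0_def combL1_def prodL0_def prodL1_def lk_def cact_def lab_def symd_def

lemma valsH:
  "wact sH laH lbH (WH ! 0) (Inl 0, {}) = (Inl 0, {1})"
  "wact sH laH lbH (WH ! 1) (Inl 0, {}) = (Inl 0, {2})"
  "wact sH laH lbH (WH ! 2) (Inl 0, {}) = (Inl 0, {3})"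
  "wact sH laH lbH (WH ! 3) (Inl 0, {}) = (Inl 0, {4})"
  "wact sH laH lbH (WH ! 4) (Inl 0, {}) = (Inl 0, {5})"
  by (simp_all add: WH_def evsimps)

lemma valsK:
  "wact sK laK lbK (WK ! 0) (Inl 0, {}) = (Inl 0, {1})"
  "wact sK laK lbK (WK ! 1) (Inl 0, {}) = (Inl 0, {2})"
  "wact sK laK lbK (WK ! 2) (Inl 0, {}) = (Inl 0, {3})"
  "wact sK laK lbK (WK ! 3) (Inl 0, {}) = (Inl 0, {4})"
  "wact sK laK lbK (WK ! 4) (Inl 0, {}) = (Inl 0, {5})"
  by (simp_all add: WK_def evsimps)

lemma valsI:
  "wact sI laI lbI (WI ! 0) ((Inl 0, Inl 0), {}) = ((Inl 0, Inl 0), {1})"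
  "wact sI laI lbI (WI ! 1) ((Inl 0, Inl 0), {}) = ((Inl 0, Inl 0), {2})"
  "wact sI laI lbI (WI ! 2) ((Inl 0, Inl 0), {}) = ((Inl 0, Inl 0), {3})"
  "wact sI laI lbI (WI ! 3) ((Inl 0, Inl 0), {}) = ((Inl 0, Inl 0), {4})"
  "wact sI laI lbI (WI ! 4) ((Inl 0, Inl 0), {}) = ((Inl 0, Inl 0), {5})"
  by (simp_all add: WI_def evsimps)

lemma valsJH0: "wact sJ laJ lbJ (WH ! 0) (Inl 0, {}) = (Inl 0, {1})"
  by (simp add: WH_def evsimps; auto)

lemma valsJH1: "wact sJ laJ lbJ (WH ! 1) (Inl 0, {}) = (Inl 0, {2})"
  by (simp add: WH_def evsimps; auto)

lemma valsJH2: "wact sJ laJ lbJ (WH ! 2) (Inl 0, {}) = (Inl 0, {})"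
  by (simp add: WH_def evsimps; auto)

lemma valsJH3: "wact sJ laJ lbJ (WH ! 3) (Inl 0, {}) = (Inl 0, {3})"
  by (simp add: WH_def evsimps; auto)

lemma valsJH4: "wact sJ laJ lbJ (WH ! 4) (Inl 0, {}) = (Inl 0, {4})"
  by (simp add: WH_def evsimps; auto)

lemmas valsJH = valsJH0 valsJH1 valsJH2 valsJH3 valsJH4


lemma valsJK0: "wact sJ laJ lbJ (WK ! 0) (Inl 0, {}) = (Inl 0, {2})"
  by (simp add: WK_def evsimps; auto)

lemma valsJK1: "wact sJ laJ lbJ (WK ! 1) (Inl 0, {}) = (Inl 0, {})"
  by (simp add: WK_def evsimps; auto)

lemma valsJK2: "wact sJ laJ lbJ (WK ! 2) (Inl 0, {}) = (Inl 0, {2})"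
  by (simp add: WK_def evsimps; auto)

lemma valsJK3: "wact sJ laJ lbJ (WK ! 3) (Inl 0, {}) = (Inl 0, {5})"
  by (simp add: WK_def evsimps; auto)

lemma valsJK4: "wact sJ laJ lbJ (WK ! 4) (Inl 0, {}) = (Inl 0, {6})"
  by (simp add: WK_def evsimps; auto)

lemmas valsJK = valsJK0 valsJK1 valsJK2 valsJK3 valsJK4


lemma zH: "0 < j \<Longrightarrow> wact sH laH lbH (zw j) (Inl 0, {}) = (Inl 0, {100 + j})"
  unfolding sH_def laH_def lbH_def by (rule comb_z) simp_all
lemma zK: "0 < j \<Longrightarrow> wact sK laK lbK (zw j) (Inl 0, {}) = (Inl 0, {100 + j})"
  unfolding sK_def laK_def lbK_def by (rule comb_z) simp_all
lemma zJ: "0 < j \<Longrightarrow> wact sJ laJ lbJ (zw j) (Inl 0, {}) = (Inl 0, {100 + j})"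
  unfolding sJ_def laJ_def lbJ_def by (rule comb_z) simp_all
lemma zI: "0 < j \<Longrightarrow> wact sI laI lbI (zw j) ((Inl 0, Inl 0), {}) = ((Inl 0, Inl 0), {100 + j})"
  unfolding sI_def sH_def sK_def laI_def lbI_def by (rule prod_z) simp_all

lemma five: "i < (5::nat) \<Longrightarrow> i = 0 \<or> i = 1 \<or> i = 2 \<or> i = 3 \<or> i = 4" by arith

lemma codes_concat: "(\<forall>x\<in>set e. \<forall>c\<in>set (f x). c < (4::nat)) \<Longrightarrow> \<forall>c\<in>set (concat (map f e)). c < 4"
  by auto

lemma codes_expr:
  assumes W: "\<forall>j<5. \<forall>c\<in>set (W ! j). c < (4::nat)" and E: "\<forall>(j, t)\<in>set e. j < (5::nat)"
  shows "\<forall>c\<in>set (concat (map (\<lambda>(j, t). if t then W ! j else invc (W ! j)) e)). c < 4"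
proof (rule codes_concat, intro ballI)
  fix x c assume x: "x \<in> set e" and c: "c \<in> set ((\<lambda>(j, t). if t then W ! j else invc (W ! j)) x)"
  obtain j t where xj: "x = (j, t)" by (cases x)
  have j: "j < 5" using E x xj by auto
  show "c < 4" using c xj W j by (cases t) (auto simp: invc_def)
qed

context fgrp begin

definition hg :: "nat \<Rightarrow> 'a" where "hg i = word_val F (enc a b (WH ! i))"
definition kg :: "nat \<Rightarrow> 'a" where "kg i = word_val F (enc a b (WK ! i))"
definition lg :: "nat \<Rightarrow> 'a" where "lg i = word_val F (enc a b (WI ! i))"
definition zg :: "nat \<Rightarrow> 'a" where "zg j = word_val F (enc a b (zw j))"

lemma encB: "set (map fst (enc a b cs)) \<subseteq> B"
  using aB bB by (auto simp: enc_def)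

lemma encB_carrier: "set (map fst (enc a b cs)) \<subseteq> carrier F"
  using encB BF by blast

lemma enc_carrier: "word_val F (enc a b cs) \<in> carrier F"
  using encB_carrier by (rule group.word_val_closed[OF grp])

lemma expr_mem:
  assumes W: "\<forall>j<5. \<forall>c\<in>set (W ! j). c < 4" and e: "\<forall>(j, t)\<in>set e. j < 5"
  shows "word_val F (enc a b (concat (map (\<lambda>(j, t). if t then W ! j else invc (W ! j)) e)))
         \<in> generate F ((\<lambda>j. word_val F (enc a b (W ! j))) ` {..<5})"
  using e
proof (induction e)
  case Nil then show ?case by (simp add: enc_def generate.one)
next
  case (Cons p e)
  obtain j t where p: "p = (j, t)" by (cases p)
  have j: "j < 5" using Cons.prems p by auto
  let ?G = "generate F ((\<lambda>j. word_val F (enc a b (W ! j))) ` {..<5})"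
  let ?x = "if t then W ! j else invc (W ! j)"
  let ?r = "concat (map (\<lambda>(j, t). if t then W ! j else invc (W ! j)) e)"
  have r: "word_val F (enc a b ?r) \<in> ?G" using Cons by auto
  have x: "word_val F (enc a b ?x) \<in> ?G"
  proof (cases t)
    case True
    have "word_val F (enc a b (W ! j)) \<in> (\<lambda>j. word_val F (enc a b (W ! j))) ` {..<5}" using j by blast
    then show ?thesis using True by (simp add: generate.incl)
  next
    case False
    have "enc a b (invc (W ! j)) = invw (enc a b (W ! j))" using W j by (intro enc_invc) auto
    then have "word_val F (enc a b (invc (W ! j))) = inv\<^bsub>F\<^esub> (word_val F (enc a b (W ! j)))"
      using group.word_val_invw[OF grp encB_carrier] by simp
    moreover have "word_val F (enc a b (W ! j)) \<in> (\<lambda>j. word_val F (enc a b (W ! j))) ` {..<5}" using j by blast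
    ultimately show ?thesis using False by (simp add: generate.inv)
  qed
  have "word_val F (enc a b (concat (map (\<lambda>(j, t). if t then W ! j else invc (W ! j)) (p # e))))
        = word_val F (enc a b ?x) \<otimes>\<^bsub>F\<^esub> word_val F (enc a b ?r)"
    using p by (simp add: enc_append group.word_val_append[OF grp encB_carrier encB_carrier])
  then show ?case using generate.eng[OF x r] by simp
qed

lemma lg_H: "i < 5 \<Longrightarrow> lg i \<in> generate F (hg ` {..<5})"
proof -
  assume i: "i < 5"
  let ?X = "concat (map (\<lambda>(j, t). if t then WH ! j else invc (WH ! j)) (EH ! i))"
  have cW: "\<forall>j<5. \<forall>c\<in>set (WH ! j). c < 4" using codesWH by blast
  have cX: "\<forall>c\<in>set ?X. c < 4" using codes_expr[OF cW EH_idx[OF i]] .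
  have ac: "a \<in> carrier F" "b \<in> carrier F" using aB bB BF by auto
  have "lg i = word_val F (enc a b (creduce ?X))" using expr_red_H[OF i] by (simp add: lg_def)
  also have "\<dots> = word_val F (enc a b ?X)" using group.word_val_creduce[OF grp ac cX] .
  finally show ?thesis using expr_mem[OF cW EH_idx[OF i]] by (simp add: hg_def[abs_def])
qed

lemma lg_K: "i < 5 \<Longrightarrow> lg i \<in> generate F (kg ` {..<5})"
proof -
  assume i: "i < 5"
  let ?X = "concat (map (\<lambda>(j, t). if t then WK ! j else invc (WK ! j)) (EK ! i))"
  have cW: "\<forall>j<5. \<forall>c\<in>set (WK ! j). c < 4" using codesWK by blast
  have cX: "\<forall>c\<in>set ?X. c < 4" using codes_expr[OF cW EK_idx[OF i]] .
  have ac: "a \<in> carrier F" "b \<in> carrier F" using aB bB BF by auto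
  have "lg i = word_val F (enc a b (creduce ?X))" using expr_red_K[OF i] by (simp add: lg_def)
  also have "\<dots> = word_val F (enc a b ?X)" using group.word_val_creduce[OF grp ac cX] .
  finally show ?thesis using expr_mem[OF cW EK_idx[OF i]] by (simp add: kg_def[abs_def])
qed

lemma QI: "cover s \<Longrightarrow> g \<in> carrier F \<Longrightarrow> psi s l0 l1 g (v0, {}) = (v0, U0) \<Longrightarrow> g \<in> fgrp.Qs F B a b s l0 l1 v0 \<and> chi s l0 l1 v0 g = U0"
  by (simp add: Qs_def chi_def)

lemma hgH: assumes i: "i < 5" shows "psi sH laH lbH (hg i) (Inl 0, {}) = (Inl 0, {Suc i})"
proof -
  have e: "psi sH laH lbH (hg i) = wact sH laH lbH (WH ! i)" unfolding hg_def by (rule psi_enc[OF covH codesWH[OF i]])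
  from five[OF i] show ?thesis unfolding e using valsH by (elim disjE) simp_all
qed

lemma kgK: assumes i: "i < 5" shows "psi sK laK lbK (kg i) (Inl 0, {}) = (Inl 0, {Suc i})"
proof -
  have e: "psi sK laK lbK (kg i) = wact sK laK lbK (WK ! i)" unfolding kg_def by (rule psi_enc[OF covK codesWK[OF i]])
  from five[OF i] show ?thesis unfolding e using valsK by (elim disjE) simp_all
qed

lemma lgI: assumes i: "i < 5" shows "psi sI laI lbI (lg i) ((Inl 0, Inl 0), {}) = ((Inl 0, Inl 0), {Suc i})"
proof -
  have e: "psi sI laI lbI (lg i) = wact sI laI lbI (WI ! i)" unfolding lg_def by (rule psi_enc[OF covI codesWI[OF i]])
  from five[OF i] show ?thesis unfolding e using valsI by (elim disjE) simp_all
qed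

lemma hgJ: assumes i: "i < 5" shows "fst (psi sJ laJ lbJ (hg i) (Inl 0, {})) = Inl 0"
proof -
  have e: "psi sJ laJ lbJ (hg i) = wact sJ laJ lbJ (WH ! i)" unfolding hg_def by (rule psi_enc[OF covJ codesWH[OF i]])
  from five[OF i] show ?thesis unfolding e using valsJH by (elim disjE) simp_all
qed

lemma kgJ: assumes i: "i < 5" shows "fst (psi sJ laJ lbJ (kg i) (Inl 0, {})) = Inl 0"
proof -
  have e: "psi sJ laJ lbJ (kg i) = wact sJ laJ lbJ (WK ! i)" unfolding kg_def by (rule psi_enc[OF covJ codesWK[OF i]])
  from five[OF i] show ?thesis unfolding e using valsJK by (elim disjE) simp_all
qed

lemma zgH: assumes j: "0 < j" shows "psi sH laH lbH (zg j) (Inl 0, {}) = (Inl 0, {100 + j})"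
proof -
  have e: "psi sH laH lbH (zg j) = wact sH laH lbH (zw j)" unfolding zg_def by (rule psi_enc[OF covH zw_codes])
  show ?thesis unfolding e by (rule zH[OF j])
qed

lemma zgK: assumes j: "0 < j" shows "psi sK laK lbK (zg j) (Inl 0, {}) = (Inl 0, {100 + j})"
proof -
  have e: "psi sK laK lbK (zg j) = wact sK laK lbK (zw j)" unfolding zg_def by (rule psi_enc[OF covK zw_codes])
  show ?thesis unfolding e by (rule zK[OF j])
qed

lemma zgJ: assumes j: "0 < j" shows "psi sJ laJ lbJ (zg j) (Inl 0, {}) = (Inl 0, {100 + j})"
proof -
  have e: "psi sJ laJ lbJ (zg j) = wact sJ laJ lbJ (zw j)" unfolding zg_def by (rule psi_enc[OF covJ zw_codes])
  show ?thesis unfolding e by (rule zJ[OF j])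
qed

lemma zgI: assumes j: "0 < j" shows "psi sI laI lbI (zg j) ((Inl 0, Inl 0), {}) = ((Inl 0, Inl 0), {100 + j})"
proof -
  have e: "psi sI laI lbI (zg j) = wact sI laI lbI (zw j)" unfolding zg_def by (rule psi_enc[OF covI zw_codes])
  show ?thesis unfolding e by (rule zI[OF j])
qed

lemma psiJ0: "psi sJ laJ lbJ (hg 0) (Inl 0, {}) = (Inl 0, {1})"
proof -
  have e: "psi sJ laJ lbJ (hg 0) = wact sJ laJ lbJ (WH ! 0)" unfolding hg_def by (rule psi_enc[OF covJ codesWH]) simp
  show ?thesis unfolding e using valsJH by simp
qed

lemma psiJ1: "psi sJ laJ lbJ (hg 1) (Inl 0, {}) = (Inl 0, {2})"
proof -
  have e: "psi sJ laJ lbJ (hg 1) = wact sJ laJ lbJ (WH ! 1)" unfolding hg_def by (rule psi_enc[OF covJ codesWH]) simp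
  show ?thesis unfolding e using valsJH by simp
qed

lemma psiJ2: "psi sJ laJ lbJ (hg 3) (Inl 0, {}) = (Inl 0, {3})"
proof -
  have e: "psi sJ laJ lbJ (hg 3) = wact sJ laJ lbJ (WH ! 3)" unfolding hg_def by (rule psi_enc[OF covJ codesWH]) simp
  show ?thesis unfolding e using valsJH by simp
qed

lemma psiJ3: "psi sJ laJ lbJ (hg 4) (Inl 0, {}) = (Inl 0, {4})"
proof -
  have e: "psi sJ laJ lbJ (hg 4) = wact sJ laJ lbJ (WH ! 4)" unfolding hg_def by (rule psi_enc[OF covJ codesWH]) simp
  show ?thesis unfolding e using valsJH by simp
qed

lemma psiJ4: "psi sJ laJ lbJ (kg 3) (Inl 0, {}) = (Inl 0, {5})"
proof -
  have e: "psi sJ laJ lbJ (kg 3) = wact sJ laJ lbJ (WK ! 3)" unfolding kg_def by (rule psi_enc[OF covJ codesWK]) simp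
  show ?thesis unfolding e using valsJK by simp
qed

lemma psiJ5: "psi sJ laJ lbJ (kg 4) (Inl 0, {}) = (Inl 0, {6})"
proof -
  have e: "psi sJ laJ lbJ (kg 4) = wact sJ laJ lbJ (WK ! 4)" unfolding kg_def by (rule psi_enc[OF covJ codesWK]) simp
  show ?thesis unfolding e using valsJK by simp
qed

lemmas psiJ_vals = psiJ0 psiJ1 psiJ2 psiJ3 psiJ4 psiJ5

lemma card_R:
  fixes k m :: nat
  assumes "k \<le> 99"
  shows "finite ({1..k} \<union> (\<lambda>j. 100 + j) ` {1..m - 5})"
    "card ({1..k} \<union> (\<lambda>j. 100 + j) ` {1..m - 5}) = k + (m - 5)"
proof -
  show "finite ({1..k} \<union> (\<lambda>j. 100 + j) ` {1..m - 5})" by simp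
  have d: "{1..k} \<inter> (\<lambda>j. 100 + j) ` {1..m - 5} = {}" using assms by auto
  have "card ({1..k} \<union> (\<lambda>j. 100 + j) ` {1..m - 5}) = card {1..k} + card ((\<lambda>j. 100 + j) ` {1..m - 5})"
    using d by (intro card_Un_disjoint) auto
  also have "card ((\<lambda>j. 100 + j) ` {1..m - 5}) = card {1..m - 5}"
    by (intro card_image) (auto simp: inj_on_def)
  finally show "card ({1..k} \<union> (\<lambda>j. 100 + j) ` {1..m - 5}) = k + (m - 5)" by simp
qed

lemma sing_R:
  assumes "r \<in> {1..k} \<union> (\<lambda>j. 100 + j) ` {1..m - 5}"
  shows "(1 \<le> r \<and> r \<le> k) \<or> (\<exists>j. r = 100 + j \<and> 1 \<le> j \<and> j \<le> m - 5)"
  using assms by auto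

theorem main:
  assumes m: "5 \<le> m"
  shows "\<exists>H K. subgroup H F \<and> subgroup K F \<and>
           grank F H = enat m \<and> grank F K = enat m \<and>
           grank F (H \<inter> K) \<ge> enat m \<and>
           grank F (generate F (H \<union> K)) > enat m"
proof -
  define SH where "SH = hg ` {..<5} \<union> zg ` {1..m - 5}"
  define SK where "SK = kg ` {..<5} \<union> zg ` {1..m - 5}"
  define H where "H = generate F SH"
  define K where "K = generate F SK"
  define R5 where "R5 = {1..5::nat} \<union> (\<lambda>j. 100 + j) ` {1..m - 5}"
  define R6 where "R6 = {1..6::nat} \<union> (\<lambda>j. 100 + j) ` {1..m - 5}"
  have fR5: "finite R5" and cR5: "card R5 = m" using card_R[of 5 m] m by (auto simp: R5_def)
  have fR6: "finite R6" and cR6: "card R6 = Suc m" using card_R[of 6 m] m by (auto simp: R6_def)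
  have hgc: "hg i \<in> carrier F" for i by (simp add: hg_def enc_carrier)
  have kgc: "kg i \<in> carrier F" for i by (simp add: kg_def enc_carrier)
  have lgc: "lg i \<in> carrier F" for i by (simp add: lg_def enc_carrier)
  have zgc: "zg i \<in> carrier F" for i by (simp add: zg_def enc_carrier)
  have SHc: "SH \<subseteq> carrier F" using hgc zgc by (auto simp: SH_def)
  have SKc: "SK \<subseteq> carrier F" using kgc zgc by (auto simp: SK_def)
  have subH: "subgroup H F" unfolding H_def by (rule group.generate_is_subgroup[OF grp SHc])
  have subK: "subgroup K F" unfolding K_def by (rule group.generate_is_subgroup[OF grp SKc])
  have SH_H: "SH \<subseteq> H" unfolding H_def by (auto intro: generate.incl)
  have SK_K: "SK \<subseteq> K" unfolding K_def by (auto intro: generate.incl)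
  have finSH: "finite SH" by (simp add: SH_def)
  have finSK: "finite SK" by (simp add: SK_def)
  have cardSH: "card SH \<le> m"
  proof -
    have "card SH \<le> card (hg ` {..<5}) + card (zg ` {1..m - 5})" unfolding SH_def by (rule card_Un_le)
    also have "\<dots> \<le> 5 + (m - 5)" using card_image_le[of "{..<5::nat}" hg] card_image_le[of "{1..m - 5}" zg] by simp
    finally show ?thesis using m by simp
  qed
  have cardSK: "card SK \<le> m"
  proof -
    have "card SK \<le> card (kg ` {..<5}) + card (zg ` {1..m - 5})" unfolding SK_def by (rule card_Un_le)
    also have "\<dots> \<le> 5 + (m - 5)" using card_image_le[of "{..<5::nat}" kg] card_image_le[of "{1..m - 5}" zg] by simp
    finally show ?thesis using m by simp
  qed
  have upH: "grank F H \<le> enat m" using SH_H finSH cardSH by (intro grank_le[of SH]) (auto simp: H_def)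
  have upK: "grank F K \<le> enat m" using SK_K finSK cardSK by (intro grank_le[of SK]) (auto simp: K_def)
  have QH: "SH \<subseteq> fgrp.Qs F B a b sH laH lbH (Inl 0)"
  proof
    fix g assume "g \<in> SH"
    then consider (h) i where "i < 5" "g = hg i" | (z) j where "1 \<le> j" "g = zg j" by (auto simp: SH_def)
    then show "g \<in> fgrp.Qs F B a b sH laH lbH (Inl 0)"
    proof cases
      case h then show ?thesis using QI[OF covH hgc hgH] by blast
    next
      case z then show ?thesis using QI[OF covH zgc zgH] by simp
    qed
  qed
  have HQ: "H \<subseteq> fgrp.Qs F B a b sH laH lbH (Inl 0)" unfolding H_def by (rule gen_Q_sub[OF covH QH])
  have lowH: "enat m \<le> grank F H"
  proof (rule grank_ge)
    fix S assume S: "S \<subseteq> H" "generate F S = H" "finite S"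
    have sing: "\<forall>r\<in>R5. \<exists>g\<in>H. chi sH laH lbH (Inl 0) g = {r}"
    proof
      fix r assume "r \<in> R5"
      then have "(1 \<le> r \<and> r \<le> 5) \<or> (\<exists>j. r = 100 + j \<and> 1 \<le> j \<and> j \<le> m - 5)" unfolding R5_def by (rule sing_R)
      then show "\<exists>g\<in>H. chi sH laH lbH (Inl 0) g = {r}"
      proof
        assume r: "1 \<le> r \<and> r \<le> 5"
        then have "hg (r - 1) \<in> H" using SH_H by (auto simp: SH_def)
        moreover have "chi sH laH lbH (Inl 0) (hg (r - 1)) = {r}"
        proof -
          have ri: "r - 1 < 5" using r by arith
          have "chi sH laH lbH (Inl 0) (hg (r - 1)) = {Suc (r - 1)}" using QI[OF covH hgc hgH[OF ri]] by blast
          then show ?thesis using r by simp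
        qed
        ultimately show ?thesis by blast
      next
        assume "\<exists>j. r = 100 + j \<and> 1 \<le> j \<and> j \<le> m - 5"
        then obtain j where j: "r = 100 + j" "1 \<le> j" "j \<le> m - 5" by blast
        then have "zg j \<in> H" using SH_H by (auto simp: SH_def)
        moreover have "chi sH laH lbH (Inl 0) (zg j) = {r}"
          using QI[OF covH zgc zgH[of j]] j by simp
        ultimately show ?thesis by blast
      qed
    qed
    have "card R5 \<le> card S" by (rule rank_lb[OF covH HQ fR5 sing S])
    then show "m \<le> card S" using cR5 by simp
  qed
  have QK: "SK \<subseteq> fgrp.Qs F B a b sK laK lbK (Inl 0)"
  proof
    fix g assume "g \<in> SK"
    then consider (h) i where "i < 5" "g = kg i" | (z) j where "1 \<le> j" "g = zg j" by (auto simp: SK_def)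
    then show "g \<in> fgrp.Qs F B a b sK laK lbK (Inl 0)"
    proof cases
      case h then show ?thesis using QI[OF covK kgc kgK] by blast
    next
      case z then show ?thesis using QI[OF covK zgc zgK] by simp
    qed
  qed
  have KQ: "K \<subseteq> fgrp.Qs F B a b sK laK lbK (Inl 0)" unfolding K_def by (rule gen_Q_sub[OF covK QK])
  have lowK: "enat m \<le> grank F K"
  proof (rule grank_ge)
    fix S assume S: "S \<subseteq> K" "generate F S = K" "finite S"
    have sing: "\<forall>r\<in>R5. \<exists>g\<in>K. chi sK laK lbK (Inl 0) g = {r}"
    proof
      fix r assume "r \<in> R5"
      then have "(1 \<le> r \<and> r \<le> 5) \<or> (\<exists>j. r = 100 + j \<and> 1 \<le> j \<and> j \<le> m - 5)" unfolding R5_def by (rule sing_R)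
      then show "\<exists>g\<in>K. chi sK laK lbK (Inl 0) g = {r}"
      proof
        assume r: "1 \<le> r \<and> r \<le> 5"
        then have "kg (r - 1) \<in> K" using SK_K by (auto simp: SK_def)
        moreover have "chi sK laK lbK (Inl 0) (kg (r - 1)) = {r}"
        proof -
          have ri: "r - 1 < 5" using r by arith
          have "chi sK laK lbK (Inl 0) (kg (r - 1)) = {Suc (r - 1)}" using QI[OF covK kgc kgK[OF ri]] by blast
          then show ?thesis using r by simp
        qed
        ultimately show ?thesis by blast
      next
        assume "\<exists>j. r = 100 + j \<and> 1 \<le> j \<and> j \<le> m - 5"
        then obtain j where j: "r = 100 + j" "1 \<le> j" "j \<le> m - 5" by blast
        then have "zg j \<in> K" using SK_K by (auto simp: SK_def)
        moreover have "chi sK laK lbK (Inl 0) (zg j) = {r}"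
          using QI[OF covK zgc zgK[of j]] j by simp
        ultimately show ?thesis by blast
      qed
    qed
    have "card R5 \<le> card S" by (rule rank_lb[OF covK KQ fR5 sing S])
    then show "m \<le> card S" using cR5 by simp
  qed
  have IQ: "H \<inter> K \<subseteq> fgrp.Qs F B a b sI laI lbI (Inl 0, Inl 0)"
  proof
    fix g assume g: "g \<in> H \<inter> K"
    have gH: "g \<in> fgrp.Qs F B a b sH laH lbH (Inl 0)" using g HQ by blast
    have gK: "g \<in> fgrp.Qs F B a b sK laK lbK (Inl 0)" using g KQ by blast
    have gc: "g \<in> carrier F" using gH Qs_def[OF covH, of laH lbH "Inl 0"] by blast
    obtain w where w: "set (map fst w) \<subseteq> B" "word_val F w = g" using carrier_word[OF covH gc] by blast
    have "fst (psi sI laI lbI g ((Inl 0, Inl 0), {})) = vfun sI w (Inl 0, Inl 0)"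
      using psi_vertex[OF covI w(1), of laI lbI "(Inl 0, Inl 0)" "{}"] w(2) by simp
    also have "\<dots> = (vfun sH w (Inl 0), vfun sK w (Inl 0))"
      by (rule vfun_prod) (simp add: sI_def prodS_def)
    also have "vfun sH w (Inl 0) = fst (psi sH laH lbH g (Inl 0, {}))"
      using psi_vertex[OF covH w(1), of laH lbH "Inl 0" "{}"] w(2) by simp
    also have "\<dots> = Inl 0" using gH Qs_def[OF covH, of laH lbH "Inl 0"] by simp
    also have "vfun sK w (Inl 0) = fst (psi sK laK lbK g (Inl 0, {}))"
      using psi_vertex[OF covK w(1), of laK lbK "Inl 0" "{}"] w(2) by simp
    also have "\<dots> = Inl 0" using gK Qs_def[OF covK, of laK lbK "Inl 0"] by simp
    finally show "g \<in> fgrp.Qs F B a b sI laI lbI (Inl 0, Inl 0)" using gc Qs_def[OF covI, of laI lbI "(Inl 0, Inl 0)"] by simp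
  qed
  have lowI: "enat m \<le> grank F (H \<inter> K)"
  proof (rule grank_ge)
    fix S assume S: "S \<subseteq> H \<inter> K" "generate F S = H \<inter> K" "finite S"
    have sing: "\<forall>r\<in>R5. \<exists>g\<in>H \<inter> K. chi sI laI lbI (Inl 0, Inl 0) g = {r}"
    proof
      fix r assume "r \<in> R5"
      then have "(1 \<le> r \<and> r \<le> 5) \<or> (\<exists>j. r = 100 + j \<and> 1 \<le> j \<and> j \<le> m - 5)" unfolding R5_def by (rule sing_R)
      then show "\<exists>g\<in>H \<inter> K. chi sI laI lbI (Inl 0, Inl 0) g = {r}"
      proof
        assume r: "1 \<le> r \<and> r \<le> 5"
        have ri: "r - 1 < 5" using r by arith
        have "hg ` {..<5} \<subseteq> SH" by (auto simp: SH_def)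
        then have "generate F (hg ` {..<5}) \<subseteq> H" unfolding H_def by (rule group.mono_generate[OF grp])
        then have inH: "lg (r - 1) \<in> H" using lg_H[OF ri] by blast
        have "kg ` {..<5} \<subseteq> SK" by (auto simp: SK_def)
        then have "generate F (kg ` {..<5}) \<subseteq> K" unfolding K_def by (rule group.mono_generate[OF grp])
        then have inK: "lg (r - 1) \<in> K" using lg_K[OF ri] by blast
        have "chi sI laI lbI (Inl 0, Inl 0) (lg (r - 1)) = {Suc (r - 1)}"
          using QI[OF covI lgc lgI[OF ri]] by blast
        then show ?thesis using inH inK r by (intro bexI[of _ "lg (r - 1)"]) auto
      next
        assume "\<exists>j. r = 100 + j \<and> 1 \<le> j \<and> j \<le> m - 5"
        then obtain j where j: "r = 100 + j" "1 \<le> j" "j \<le> m - 5" by blast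
        then have "zg j \<in> H \<inter> K" using SH_H SK_K by (auto simp: SH_def SK_def)
        moreover have "chi sI laI lbI (Inl 0, Inl 0) (zg j) = {r}"
          using QI[OF covI zgc zgI[of j]] j by simp
        ultimately show ?thesis by blast
      qed
    qed
    have "card R5 \<le> card S" by (rule rank_lb[OF covI IQ fR5 sing S])
    then show "m \<le> card S" using cR5 by simp
  qed
  define JJ where "JJ = generate F (H \<union> K)"
  have QJ1: "SH \<subseteq> fgrp.Qs F B a b sJ laJ lbJ (Inl 0)"
  proof
    fix g assume "g \<in> SH"
    then consider (h) i where "i < 5" "g = hg i" | (z) j where "1 \<le> j" "g = zg j" by (auto simp: SH_def)
    then show "g \<in> fgrp.Qs F B a b sJ laJ lbJ (Inl 0)"
    proof cases
      case h then show ?thesis using hgJ[of i] hgc Qs_def[OF covJ, of laJ lbJ "Inl 0"] by simp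
    next
      case z then show ?thesis using QI[OF covJ zgc zgJ] by simp
    qed
  qed
  have QJ2: "SK \<subseteq> fgrp.Qs F B a b sJ laJ lbJ (Inl 0)"
  proof
    fix g assume "g \<in> SK"
    then consider (h) i where "i < 5" "g = kg i" | (z) j where "1 \<le> j" "g = zg j" by (auto simp: SK_def)
    then show "g \<in> fgrp.Qs F B a b sJ laJ lbJ (Inl 0)"
    proof cases
      case h then show ?thesis using kgJ[of i] kgc Qs_def[OF covJ, of laJ lbJ "Inl 0"] by simp
    next
      case z then show ?thesis using QI[OF covJ zgc zgJ] by simp
    qed
  qed
  have HJ: "H \<subseteq> fgrp.Qs F B a b sJ laJ lbJ (Inl 0)" unfolding H_def by (rule gen_Q_sub[OF covJ QJ1])
  have KJ: "K \<subseteq> fgrp.Qs F B a b sJ laJ lbJ (Inl 0)" unfolding K_def by (rule gen_Q_sub[OF covJ QJ2])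
  have JQ: "JJ \<subseteq> fgrp.Qs F B a b sJ laJ lbJ (Inl 0)" unfolding JJ_def
    by (rule gen_Q_sub[OF covJ]) (use HJ KJ in blast)
  have HKJ: "H \<union> K \<subseteq> JJ" unfolding JJ_def by (auto intro: generate.incl)
  have lowJ: "enat (Suc m) \<le> grank F JJ"
  proof (rule grank_ge)
    fix S assume S: "S \<subseteq> JJ" "generate F S = JJ" "finite S"
    have hJ: "hg i \<in> JJ" if "i < 5" for i
    proof -
      have "hg i \<in> SH" using that by (simp add: SH_def)
      then show ?thesis using SH_H HKJ by blast
    qed
    have kJ: "kg i \<in> JJ" if "i < 5" for i
    proof -
      have "kg i \<in> SK" using that by (simp add: SK_def)
      then show ?thesis using SK_K HKJ by blast
    qed
    have c0: "chi sJ laJ lbJ (Inl 0) (hg 0) = {1}" using QI[OF covJ hgc psiJ0] by (rule conjunct2)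
    have c1: "chi sJ laJ lbJ (Inl 0) (hg 1) = {2}" using QI[OF covJ hgc psiJ1] by (rule conjunct2)
    have c2: "chi sJ laJ lbJ (Inl 0) (hg 3) = {3}" using QI[OF covJ hgc psiJ2] by (rule conjunct2)
    have c3: "chi sJ laJ lbJ (Inl 0) (hg 4) = {4}" using QI[OF covJ hgc psiJ3] by (rule conjunct2)
    have c4: "chi sJ laJ lbJ (Inl 0) (kg 3) = {5}" using QI[OF covJ kgc psiJ4] by (rule conjunct2)
    have c5: "chi sJ laJ lbJ (Inl 0) (kg 4) = {6}" using QI[OF covJ kgc psiJ5] by (rule conjunct2)
    note chJ = c0 c1 c2 c3 c4 c5
    have sing: "\<forall>r\<in>R6. \<exists>g\<in>JJ. chi sJ laJ lbJ (Inl 0) g = {r}"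
    proof
      fix r assume "r \<in> R6"
      then have "(1 \<le> r \<and> r \<le> 6) \<or> (\<exists>j. r = 100 + j \<and> 1 \<le> j \<and> j \<le> m - 5)" unfolding R6_def by (rule sing_R)
      then show "\<exists>g\<in>JJ. chi sJ laJ lbJ (Inl 0) g = {r}"
      proof
        assume r: "1 \<le> r \<and> r \<le> 6"
        then have rr: "r = 1 \<or> r = 2 \<or> r = 3 \<or> r = 4 \<or> r = 5 \<or> r = 6" by arith
        have e1: "\<exists>g\<in>JJ. chi sJ laJ lbJ (Inl 0) g = {1}" using chJ(1) hJ[of 0] by (intro bexI[of _ "hg 0"]) simp_all
        have e2: "\<exists>g\<in>JJ. chi sJ laJ lbJ (Inl 0) g = {2}" using chJ(2) hJ[of 1] by (intro bexI[of _ "hg 1"]) simp_all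
        have e3: "\<exists>g\<in>JJ. chi sJ laJ lbJ (Inl 0) g = {3}" using chJ(3) hJ[of 3] by (intro bexI[of _ "hg 3"]) simp_all
        have e4: "\<exists>g\<in>JJ. chi sJ laJ lbJ (Inl 0) g = {4}" using chJ(4) hJ[of 4] by (intro bexI[of _ "hg 4"]) simp_all
        have e5: "\<exists>g\<in>JJ. chi sJ laJ lbJ (Inl 0) g = {5}" using chJ(5) kJ[of 3] by (intro bexI[of _ "kg 3"]) simp_all
        have e6: "\<exists>g\<in>JJ. chi sJ laJ lbJ (Inl 0) g = {6}" using chJ(6) kJ[of 4] by (intro bexI[of _ "kg 4"]) simp_all
        from rr show ?thesis
          by (elim disjE) (use e1 e2 e3 e4 e5 e6 in simp_all)
      next
        assume "\<exists>j. r = 100 + j \<and> 1 \<le> j \<and> j \<le> m - 5"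
        then obtain j where j: "r = 100 + j" "1 \<le> j" "j \<le> m - 5" by blast
        then have "zg j \<in> SH" by (simp add: SH_def)
        then have "zg j \<in> JJ" using SH_H HKJ by blast
        moreover have "chi sJ laJ lbJ (Inl 0) (zg j) = {r}"
          using QI[OF covJ zgc zgJ[of j]] j by simp
        ultimately show ?thesis by blast
      qed
    qed
    have "card R6 \<le> card S" by (rule rank_lb[OF covJ JQ fR6 sing S])
    then show "Suc m \<le> card S" using cR6 by simp
  qed
  have "enat m < enat (Suc m)" by simp
  then have gtJ: "enat m < grank F JJ" using lowJ by (rule less_le_trans)
  have eH: "grank F H = enat m" using upH lowH by (rule order.antisym)
  have eK: "grank F K = enat m" using upK lowK by (rule order.antisym)
  show ?thesis
    using subH subK eH eK lowI gtJ unfolding JJ_def by blast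
qed

end

lemma nonabelian_two_basis:
  assumes grp: "group F" and fb: "free_basis F B"
    and na: "\<exists>a\<in>carrier F. \<exists>b\<in>carrier F. a \<otimes>\<^bsub>F\<^esub> b \<noteq> b \<otimes>\<^bsub>F\<^esub> a"
  shows "\<exists>x\<in>B. \<exists>y\<in>B. x \<noteq> y"
proof (rule ccontr)
  assume "\<not> (\<exists>x\<in>B. \<exists>y\<in>B. x \<noteq> y)"
  then have sub: "\<forall>x\<in>B. \<forall>y\<in>B. x = y" by blast
  have BF: "B \<subseteq> carrier F" using fb by (simp add: free_basis_def)
  obtain c where c: "c \<in> carrier F" "B \<subseteq> {c}"
  proof (cases "B = {}")
    case True
    then show ?thesis using that[of "\<one>\<^bsub>F\<^esub>"] monoid.one_closed[OF group.is_monoid[OF grp]] by blast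
  next
    case False
    then obtain x where x: "x \<in> B" by blast
    then have "B \<subseteq> {x}" using sub by blast
    then show ?thesis using that[of x] x BF by blast
  qed
  have "carrier F = generate F B" using fb by (simp add: free_basis_def)
  also have "\<dots> \<subseteq> generate F {c}" using c(2) by (rule group.mono_generate[OF grp])
  also have "\<dots> = {c [^]\<^bsub>F\<^esub> (k::int) | k. k \<in> UNIV}" using c(1) by (rule group.generate_pow[OF grp])
  finally have cs: "carrier F \<subseteq> {c [^]\<^bsub>F\<^esub> (k::int) | k. k \<in> UNIV}" .
  obtain x y where xy: "x \<in> carrier F" "y \<in> carrier F" "x \<otimes>\<^bsub>F\<^esub> y \<noteq> y \<otimes>\<^bsub>F\<^esub> x" using na by blast
  obtain i :: int where i: "x = c [^]\<^bsub>F\<^esub> i" using cs xy(1) by blast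
  obtain j :: int where j: "y = c [^]\<^bsub>F\<^esub> j" using cs xy(2) by blast
  have "x \<otimes>\<^bsub>F\<^esub> y = c [^]\<^bsub>F\<^esub> (i + j)" using i j group.int_pow_mult[OF grp c(1)] by simp
  also have "\<dots> = c [^]\<^bsub>F\<^esub> (j + i)" by (simp add: add.commute)
  also have "\<dots> = y \<otimes>\<^bsub>F\<^esub> x" using i j group.int_pow_mult[OF grp c(1)] by simp
  finally show False using xy(3) by simp
qed

theorem corollary1p2:
  fixes F :: "('a, 'b) monoid_scheme" and m :: nat
  assumes "free_group F"
    and "\<exists>a\<in>carrier F. \<exists>b\<in>carrier F. a \<otimes>\<^bsub>F\<^esub> b \<noteq> b \<otimes>\<^bsub>F\<^esub> a"
    and "m \<ge> 5"
  shows "\<exists>H K. subgroup H F \<and> subgroup K F \<and>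
           grank F H = enat m \<and> grank F K = enat m \<and>
           grank F (H \<inter> K) \<ge> enat m \<and>
           grank F (generate F (H \<union> K)) > enat m"
proof -
  obtain B where fb: "free_basis F B" and grp: "group F" using assms(1) by (auto simp: free_group_def)
  obtain a0 b0 where ab: "a0 \<in> B" "b0 \<in> B" "a0 \<noteq> b0"
    using nonabelian_two_basis[OF grp fb assms(2)] by blast
  interpret fgrp F B a0 b0 using grp fb ab by (simp add: fgrp_def)
  show ?thesis using main assms(3) by blast
qed

end
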